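(* Let $(P,H,\phi)$ be a host-parasite triple and let $\Psi=\{\psi_1,\dots,\psi_l\}\subseteq\mathcal R(P,H,\phi)$ with $l\ge1$. Then $\psi^{\Psi}_{med}$ is a geometric median for $\Psi$ in $\mathcal R(P,H,\phi)$ endowed with the metric $d_{edit}$ $(=d_{path})$; that is, for every $\psi\in\mathcal R(P,H,\phi)$, $$\sum_{i=1}^l d_{edit}(\psi^{\Psi}_{med},\psi_i)\le\sum_{i=1}^l d_{edit}(\psi,\psi_i).$$
   Context: A phylogenetic tree $T$ is a finite rooted tree with root $\rho_T$ (indegree $0$, outdegree $2$), in which every vertex other than the root and the leaves has indegree $1$ and outdegree $2$; $V(T)$ is its vertex set, $L(T)$ its leaf set, $V^o(T)=V(T)-L(T)$. For $v\in V^o(T)$, $Ch(v)$ is the set of children of $v$; for $v\ne\rho_T$, $par(v)$ is its parent. $x\succeq_T y$ means $x$ lies on the path from $\rho_T$ to $y$; $x\succ_T y$ means $x\succeq_T y$ and $x\ne y$. For $L\subseteq L(T)$ with $|L|\ge 2$, $lca_T(L)$ is the lowest vertex above every element of $L$; if $L=\{x\}$ then $lca_T(L)=x$. $d_T(v,w)$ is the number of edges on the (undirected) path in $T$ between $v$ and $w$. A host-parasite triple $(P,H,\phi)$ consists of two phylogenetic trees $P,H$ and a map $\phi:L(P)\to L(H)$. A reconciliation map is a map $\psi:V(P)\to V(H)$ such that (i) $\psi$ restricted to $L(P)$ equals $\phi$, and (ii) for every $v\in V^o(P)$ and every child $v'$ of $v$, $\psi(v)\succeq_H\psi(v')$; $\mathcal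 R(P,H,\phi)$ is the set of all of them. For $v\in V(P)$ let $m(v)=lca_H(\{\phi(x): x\in L(P),\ v\succeq_P x\})$ and $A(v)=\{w\in V(H): \rho_H\succeq_H w\succeq_H m(v)\}$. Up operation: given $\psi\in\mathcal R(P,H,\phi)$ and $w\in V(P)$ with $\psi(w)\notin\{\rho_H,\psi(par(w))\}$ (second condition vacuous if $w=\rho_P$), $\psi^{up}_w$ agrees with $\psi$ except $\psi^{up}_w(w)=par(\psi(w))$. Down operation: given $\psi\in\mathcal R(P,H,\phi)$ and $w\in V^o(P)$ with $\psi(w)\succ_H m(w)$ and $\psi(w)\ne\psi(v')$ for all $v'\in Ch(w)$, $\psi^{down}_w$ agrees with $\psi$ except that $\psi^{down}_w(w)$ is the unique vertex of $A(w)\cap Ch(\psi(w))$. $d_{edit}(\psi,\psi')$ is the smallest number of up/down operations transforming $\psi$ into $\psi'$; it equals $d_{path}(\psi,\psi')=\sum_{v\in V(P)}d_H(\psi(v),\psi'(v))$. For a finite multiset $A$ of reals, $med(A)$ is its median (average of the two middle elements for even cardinality); for real $r$, $[r]$ is the nearest integer, the larger one in case of a tie; for integers $n_1,\dots,n_l$, $zmed(n_1,\dots,n_l)=[med(\{n_1,\dots,n_l\})]$. The map $\psi^{\Psi}_{med}:V(P)\to V(H)$ is defined by letting $\psi^{\Psi}_{med}(v)$, for $v\in V(P)$, be the element $w\in A(v)$ with $d_H(m(v),w)=zmed(n_1,\dots,n_l)$, where $n_i=d_H(m(v),\psi_i(v))$. *)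

theory Defs
  imports Complex_Main "HOL-Library.Multiset"
begin

record 'a rtree =
  verts :: "'a set"
  root :: 'a
  parent :: "'a \<Rightarrow> 'a"

definition children :: "'a rtree \<Rightarrow> 'a \<Rightarrow> 'a set" where
  "children T v = {u \<in> verts T. u \<noteq> root T \<and> parent T u = v}"

definition leaves :: "'a rtree \<Rightarrow> 'a set" where
  "leaves T = {v \<in> verts T. children T v = {}}"

definition inner :: "'a rtree \<Rightarrow> 'a set" where
  "inner T = verts T - leaves T"

text \<open>Phylogenetic tree: finite rooted tree, every vertex reaches the root via parents,
  root and every inner vertex have exactly two children (indegree of non-root vertices is 1
  via the parent function; the root has no parent).\<close>
definition phylo_tree :: "'a rtree \<Rightarrow> bool" where
  "phylo_tree T \<longleftrightarrow> finite (verts T) \<and> root T \<in> verts T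
     \<and> (\<forall>v \<in> verts T - {root T}. parent T v \<in> verts T)
     \<and> (\<forall>v \<in> verts T. \<exists>n. (parent T ^^ n) v = root T)
     \<and> root T \<notin> leaves T
     \<and> (\<forall>v \<in> inner T. card (children T v) = 2)"

text \<open>anc T x y means x \<succeq>_T y: x lies on the path from the root to y.\<close>
inductive anc :: "'a rtree \<Rightarrow> 'a \<Rightarrow> 'a \<Rightarrow> bool" for T where
  refl: "x \<in> verts T \<Longrightarrow> anc T x x"
| step: "anc T x (parent T y) \<Longrightarrow> y \<in> verts T \<Longrightarrow> y \<noteq> root T \<Longrightarrow> anc T x y"

definition sanc :: "'a rtree \<Rightarrow> 'a \<Rightarrow> 'a \<Rightarrow> bool" where
  "sanc T x y \<longleftrightarrow> anc T x y \<and> x \<noteq> y"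

definition lca :: "'a rtree \<Rightarrow> 'a set \<Rightarrow> 'a" where
  "lca T L = (THE w. w \<in> verts T \<and> (\<forall>x\<in>L. anc T w x)
                     \<and> (\<forall>w'\<in>verts T. (\<forall>x\<in>L. anc T w' x) \<longrightarrow> anc T w' w))"

definition adj :: "'a rtree \<Rightarrow> 'a \<Rightarrow> 'a \<Rightarrow> bool" where
  "adj T u v \<longleftrightarrow> u \<in> verts T \<and> v \<in> verts T \<and>
     ((u \<noteq> root T \<and> parent T u = v) \<or> (v \<noteq> root T \<and> parent T v = u))"

definition walk :: "'a rtree \<Rightarrow> 'a list \<Rightarrow> 'a \<Rightarrow> 'a \<Rightarrow> bool" where
  "walk T xs u v \<longleftrightarrow> xs \<noteq> [] \<and> hd xs = u \<and> last xs = v \<and> set xs \<subseteq> verts T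
     \<and> (\<forall>i. Suc i < length xs \<longrightarrow> adj T (xs ! i) (xs ! Suc i))"

definition tdist :: "'a rtree \<Rightarrow> 'a \<Rightarrow> 'a \<Rightarrow> nat" where
  "tdist T u v = (LEAST n. \<exists>xs. walk T xs u v \<and> length xs = Suc n)"

definition hp_triple :: "'p rtree \<Rightarrow> 'h rtree \<Rightarrow> ('p \<Rightarrow> 'h) \<Rightarrow> bool" where
  "hp_triple P H \<phi> \<longleftrightarrow> phylo_tree P \<and> phylo_tree H \<and> (\<forall>x \<in> leaves P. \<phi> x \<in> leaves H)"

text \<open>Reconciliation maps V(P) \<rightarrow> V(H), represented extensionally (undefined outside V(P)).\<close>
definition recon :: "'p rtree \<Rightarrow> 'h rtree \<Rightarrow> ('p \<Rightarrow> 'h) \<Rightarrow> ('p \<Rightarrow> 'h) set" where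
  "recon P H \<phi> = {\<psi>. (\<forall>v \<in> verts P. \<psi> v \<in> verts H)
      \<and> (\<forall>v. v \<notin> verts P \<longrightarrow> \<psi> v = undefined)
      \<and> (\<forall>x \<in> leaves P. \<psi> x = \<phi> x)
      \<and> (\<forall>v \<in> inner P. \<forall>v' \<in> children P v. anc H (\<psi> v) (\<psi> v'))}"

definition mlca :: "'p rtree \<Rightarrow> 'h rtree \<Rightarrow> ('p \<Rightarrow> 'h) \<Rightarrow> 'p \<Rightarrow> 'h" where
  "mlca P H \<phi> v = lca H (\<phi> ` {x \<in> leaves P. anc P v x})"

definition Aset :: "'p rtree \<Rightarrow> 'h rtree \<Rightarrow> ('p \<Rightarrow> 'h) \<Rightarrow> 'p \<Rightarrow> 'h set" where
  "Aset P H \<phi> v = {w \<in> verts H. anc H (root H) w \<and> anc H w (mlca P H \<phi> v)}"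

definition up_ok :: "'p rtree \<Rightarrow> 'h rtree \<Rightarrow> ('p \<Rightarrow> 'h) \<Rightarrow> ('p \<Rightarrow> 'h) \<Rightarrow> 'p \<Rightarrow> bool" where
  "up_ok P H \<phi> \<psi> w \<longleftrightarrow> \<psi> \<in> recon P H \<phi> \<and> w \<in> verts P \<and> \<psi> w \<noteq> root H
     \<and> (w \<noteq> root P \<longrightarrow> \<psi> w \<noteq> \<psi> (parent P w))"

definition up_op :: "'h rtree \<Rightarrow> ('p \<Rightarrow> 'h) \<Rightarrow> 'p \<Rightarrow> ('p \<Rightarrow> 'h)" where
  "up_op H \<psi> w = \<psi>(w := parent H (\<psi> w))"

definition down_ok :: "'p rtree \<Rightarrow> 'h rtree \<Rightarrow> ('p \<Rightarrow> 'h) \<Rightarrow> ('p \<Rightarrow> 'h) \<Rightarrow> 'p \<Rightarrow> bool" where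
  "down_ok P H \<phi> \<psi> w \<longleftrightarrow> \<psi> \<in> recon P H \<phi> \<and> w \<in> inner P
     \<and> sanc H (\<psi> w) (mlca P H \<phi> w) \<and> (\<forall>v' \<in> children P w. \<psi> w \<noteq> \<psi> v')"

definition down_op :: "'p rtree \<Rightarrow> 'h rtree \<Rightarrow> ('p \<Rightarrow> 'h) \<Rightarrow> ('p \<Rightarrow> 'h) \<Rightarrow> 'p \<Rightarrow> ('p \<Rightarrow> 'h)" where
  "down_op P H \<phi> \<psi> w = \<psi>(w := (THE u. u \<in> Aset P H \<phi> w \<inter> children H (\<psi> w)))"

definition edit_step :: "'p rtree \<Rightarrow> 'h rtree \<Rightarrow> ('p \<Rightarrow> 'h) \<Rightarrow> ('p \<Rightarrow> 'h) \<Rightarrow> ('p \<Rightarrow> 'h) \<Rightarrow> bool" where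
  "edit_step P H \<phi> \<psi> \<psi>' \<longleftrightarrow>
     (\<exists>w. up_ok P H \<phi> \<psi> w \<and> \<psi>' = up_op H \<psi> w) \<or>
     (\<exists>w. down_ok P H \<phi> \<psi> w \<and> \<psi>' = down_op P H \<phi> \<psi> w)"

definition d_edit :: "'p rtree \<Rightarrow> 'h rtree \<Rightarrow> ('p \<Rightarrow> 'h) \<Rightarrow> ('p \<Rightarrow> 'h) \<Rightarrow> ('p \<Rightarrow> 'h) \<Rightarrow> nat" where
  "d_edit P H \<phi> \<psi> \<psi>' = (LEAST n. (edit_step P H \<phi> ^^ n) \<psi> \<psi>')"

definition med :: "real multiset \<Rightarrow> real" where
  "med A = (let xs = sorted_list_of_multiset A; n = size A in
     if odd n then xs ! (n div 2) else (xs ! (n div 2 - 1) + xs ! (n div 2)) / 2)"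

definition nearest_int :: "real \<Rightarrow> int" where
  "nearest_int r = \<lfloor>r + 1/2\<rfloor>"

definition zmed :: "int multiset \<Rightarrow> int" where
  "zmed N = nearest_int (med (image_mset real_of_int N))"

definition psi_med :: "'p rtree \<Rightarrow> 'h rtree \<Rightarrow> ('p \<Rightarrow> 'h) \<Rightarrow> (nat \<Rightarrow> ('p \<Rightarrow> 'h)) \<Rightarrow> nat \<Rightarrow> 'p \<Rightarrow> 'h" where
  "psi_med P H \<phi> \<Psi> l v = (if v \<in> verts P then
     (THE w. w \<in> Aset P H \<phi> v \<and>
        int (tdist H (mlca P H \<phi> v) w)
          = zmed (image_mset (\<lambda>i. int (tdist H (mlca P H \<phi> v) (\<Psi> i v))) (mset [1..<Suc l])))
     else undefined)"

end

theory Submission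
  imports Defs
begin

definition dep :: "'a rtree \<Rightarrow> 'a \<Rightarrow> nat" where
  "dep T v = (LEAST n. (parent T ^^ n) v = root T)"

lemma anc_verts: "anc T x y \<Longrightarrow> phylo_tree T \<Longrightarrow> x \<in> verts T \<and> y \<in> verts T"
  by (induction rule: anc.induct) (auto simp: phylo_tree_def)

lemma parent_in: "phylo_tree T \<Longrightarrow> v \<in> verts T \<Longrightarrow> v \<noteq> root T \<Longrightarrow> parent T v \<in> verts T"
  by (auto simp: phylo_tree_def)

lemma dep_ex: "phylo_tree T \<Longrightarrow> v \<in> verts T \<Longrightarrow> (parent T ^^ dep T v) v = root T"
  unfolding dep_def phylo_tree_def by (meson LeastI)

lemma dep_root: "dep T (root T) = 0"
  unfolding dep_def by (rule Least_eq_0) simp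

lemma dep_parent:
  assumes T: "phylo_tree T" and v: "v \<in> verts T" "v \<noteq> root T"
  shows "dep T v = Suc (dep T (parent T v))"
proof -
  have pv: "parent T v \<in> verts T" using parent_in[OF T v] .
  have e1: "(parent T ^^ dep T v) v = root T" using dep_ex[OF T v(1)] .
  have e2: "(parent T ^^ dep T (parent T v)) (parent T v) = root T" using dep_ex[OF T pv] .
  have "dep T v \<noteq> 0" using e1 v by (metis funpow_0)
  then obtain k where k: "dep T v = Suc k" by (cases "dep T v") auto
  have "(parent T ^^ k) (parent T v) = root T" using e1 k by (simp add: funpow_Suc_right del: funpow.simps)
  hence "dep T (parent T v) \<le> k" unfolding dep_def by (rule Least_le)
  moreover have "(parent T ^^ Suc (dep T (parent T v))) v = root T"
    using e2 by (simp add: funpow_Suc_right del: funpow.simps)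
  hence "dep T v \<le> Suc (dep T (parent T v))" unfolding dep_def by (rule Least_le)
  ultimately show ?thesis using k by simp
qed

lemma dep_zero: "phylo_tree T \<Longrightarrow> v \<in> verts T \<Longrightarrow> dep T v = 0 \<Longrightarrow> v = root T"
  using dep_ex by fastforce

lemma anc_dep: "anc T x y \<Longrightarrow> phylo_tree T \<Longrightarrow> dep T x \<le> dep T y \<and> (x \<noteq> y \<longrightarrow> dep T x < dep T y)"
proof (induction rule: anc.induct)
  case (refl x) then show ?case by simp
next
  case (step x y)
  then show ?case using dep_parent[of T y] by auto
qed

lemma anc_antisym: "phylo_tree T \<Longrightarrow> anc T x y \<Longrightarrow> anc T y x \<Longrightarrow> x = y"
  using anc_dep[of T x y] anc_dep[of T y x] by auto

lemma anc_trans: "anc T b c \<Longrightarrow> anc T a b \<Longrightarrow> anc T a c"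
  by (induction rule: anc.induct) (auto intro: anc.step)

lemma anc_inv: "anc T x y \<Longrightarrow> x = y \<or> (y \<in> verts T \<and> y \<noteq> root T \<and> anc T x (parent T y))"
  by (erule anc.cases) auto

lemma anc_comparable: "anc T x y \<Longrightarrow> anc T z y \<Longrightarrow> anc T x z \<or> anc T z x"
proof (induction arbitrary: z rule: anc.induct)
  case (refl x) then show ?case by simp
next
  case (step x y)
  from anc_inv[OF step.prems] show ?case
  proof
    assume "z = y" then show ?thesis using step by (auto intro: anc.step)
  next
    assume "y \<in> verts T \<and> y \<noteq> root T \<and> anc T z (parent T y)"
    then show ?thesis using step.IH by blast
  qed
qed

lemma anc_parent: "phylo_tree T \<Longrightarrow> v \<in> verts T \<Longrightarrow> v \<noteq> root T \<Longrightarrow> anc T (parent T v) v"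
  by (rule anc.step) (auto intro: anc.refl parent_in)

lemma root_anc:
  assumes T: "phylo_tree T" shows "v \<in> verts T \<Longrightarrow> anc T (root T) v"
proof (induction "dep T v" arbitrary: v)
  case 0 then show ?case using dep_zero[OF T] T by (auto intro: anc.refl simp: phylo_tree_def)
next
  case (Suc n)
  then have "v \<noteq> root T" using dep_root by (metis nat.distinct(1))
  then show ?case using Suc dep_parent[OF T] parent_in[OF T] by (auto intro: anc.step)
qed

lemma sanc_child: "anc T x y \<Longrightarrow> x \<noteq> y \<Longrightarrow>
   \<exists>c. c \<in> verts T \<and> c \<noteq> root T \<and> parent T c = x \<and> anc T c y"
proof (induction rule: anc.induct)
  case (refl x) then show ?case by simp
next
  case (step x y)
  show ?case
  proof (cases "x = parent T y")
    case True then show ?thesis using step by (auto intro: anc.refl)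
  next
    case False then show ?thesis using step by (auto intro: anc.step)
  qed
qed

lemma anc_le_dep: "phylo_tree T \<Longrightarrow> anc T a c \<Longrightarrow> anc T b c \<Longrightarrow> dep T a \<le> dep T b \<Longrightarrow> anc T a b"
  using anc_comparable anc_dep by (metis leD)

lemma anc_eq_dep: "phylo_tree T \<Longrightarrow> anc T a c \<Longrightarrow> anc T b c \<Longrightarrow> dep T a = dep T b \<Longrightarrow> a = b"
  using anc_comparable anc_dep by (metis less_irrefl)

lemma anc_at_dep:
  assumes T: "phylo_tree T" shows "anc T r b \<Longrightarrow> r = root T \<Longrightarrow> k \<le> dep T b \<Longrightarrow> \<exists>a. anc T a b \<and> dep T a = k"
proof (induction rule: anc.induct)
  case (refl x) then show ?case by (intro exI[of _ x]) (auto intro: anc.refl simp: dep_root)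
next
  case (step x y)
  show ?case
  proof (cases "k = dep T y")
    case True then show ?thesis using step by (auto intro: anc.refl)
  next
    case False
    then have "k \<le> dep T (parent T y)" using step dep_parent[OF T] by force
    then show ?thesis using step by (auto intro: anc.step)
  qed
qed

lemma walk_single: "x \<in> verts T \<Longrightarrow> walk T [x] x x"
  by (simp add: walk_def)

lemma walk_Cons: "walk T xs y v \<Longrightarrow> adj T x y \<Longrightarrow> walk T (x # xs) x v"
  unfolding walk_def
proof (intro conjI allI impI)
  fix i assume w: "xs \<noteq> [] \<and> hd xs = y \<and> last xs = v \<and> set xs \<subseteq> verts T \<and>
      (\<forall>i. Suc i < length xs \<longrightarrow> adj T (xs ! i) (xs ! Suc i))" and a: "adj T x y"
    and i: "Suc i < length (x # xs)"
  show "adj T ((x # xs) ! i) ((x # xs) ! Suc i)"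
  proof (cases i)
    case 0 then show ?thesis using w a hd_conv_nth by (metis nth_Cons_0 nth_Cons_Suc)
  next
    case (Suc j) then show ?thesis using w i by simp
  qed
qed (auto simp: adj_def)

lemma walk_snoc: "walk T xs u y \<Longrightarrow> adj T y z \<Longrightarrow> walk T (xs @ [z]) u z"
  unfolding walk_def
proof (intro conjI allI impI)
  fix i assume w: "xs \<noteq> [] \<and> hd xs = u \<and> last xs = y \<and> set xs \<subseteq> verts T \<and>
      (\<forall>i. Suc i < length xs \<longrightarrow> adj T (xs ! i) (xs ! Suc i))" and a: "adj T y z"
    and i: "Suc i < length (xs @ [z])"
  show "adj T ((xs @ [z]) ! i) ((xs @ [z]) ! Suc i)"
  proof (cases "Suc i < length xs")
    case True then show ?thesis using w by (simp add: nth_append)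
  next
    case False
    then have "i = length xs - 1" using i by simp
    then have "(xs @ [z]) ! i = last xs" "(xs @ [z]) ! Suc i = z" using w by (auto simp: nth_append last_conv_nth)
    then show ?thesis using w a by simp
  qed
qed (auto simp: adj_def)

lemma walk_tl: "walk T (x # y # ys) u v \<Longrightarrow> walk T (y # ys) y v \<and> adj T x y \<and> x = u"
proof -
  assume w: "walk T (x # y # ys) u v"
  have "Suc 0 < length (x # y # ys)" by simp
  then have "adj T ((x # y # ys) ! 0) ((x # y # ys) ! Suc 0)" using w unfolding walk_def by blast
  moreover have "\<forall>i. Suc i < length (y # ys) \<longrightarrow> adj T ((y # ys) ! i) ((y # ys) ! Suc i)"
  proof (intro allI impI)
    fix i assume "Suc i < length (y # ys)"
    then have "Suc (Suc i) < length (x # y # ys)" by simp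
    then have "adj T ((x # y # ys) ! Suc i) ((x # y # ys) ! Suc (Suc i))" using w unfolding walk_def by blast
    then show "adj T ((y # ys) ! i) ((y # ys) ! Suc i)" by simp
  qed
  moreover have "set (y # ys) \<subseteq> verts T" "last (y # ys) = v" "x = u" using w unfolding walk_def by auto
  ultimately show ?thesis unfolding walk_def by simp
qed

lemma adj_dep: "phylo_tree T \<Longrightarrow> adj T u v \<Longrightarrow> dep T u = Suc (dep T v) \<or> dep T v = Suc (dep T u)"
proof -
  assume T: "phylo_tree T" and a: "adj T u v"
  then have "(u \<in> verts T \<and> u \<noteq> root T \<and> parent T u = v) \<or> (v \<in> verts T \<and> v \<noteq> root T \<and> parent T v = u)" unfolding adj_def by blast
  then show ?thesis using dep_parent[OF T] by blast
qed

lemma walk_lower: "phylo_tree T \<Longrightarrow> walk T xs u v \<Longrightarrow> \<bar>int (dep T u) - int (dep T v)\<bar> \<le> int (length xs) - 1"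
proof (induction xs arbitrary: u)
  case Nil then show ?case by (simp add: walk_def)
next
  case (Cons x xs)
  show ?case
  proof (cases xs)
    case Nil then have "u = v" using Cons.prems unfolding walk_def by auto
    then show ?thesis by simp
  next
    case (Cons y ys)
    have w: "walk T (y # ys) y v \<and> adj T x y \<and> x = u" using walk_tl[of T x y ys u v] Cons.prems(2) unfolding \<open>xs = y # ys\<close> by blast
    have ih: "\<bar>int (dep T y) - int (dep T v)\<bar> \<le> int (length xs) - 1" 
      using Cons.IH[OF Cons.prems(1)] w unfolding \<open>xs = y # ys\<close> by blast
    have "dep T u = Suc (dep T y) \<or> dep T y = Suc (dep T u)" using adj_dep[OF Cons.prems(1)] w by blast
    then show ?thesis using ih by auto
  qed
qed

lemma walk_up: "anc T a b \<Longrightarrow> phylo_tree T \<Longrightarrow> \<exists>xs. walk T xs b a \<and> length xs = Suc (dep T b - dep T a)"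
proof (induction rule: anc.induct)
  case (refl x)
  have "walk T [x] x x" using refl(1) by (rule walk_single)
  then show ?case by (intro exI[of _ "[x]"]) simp
next
  case (step x y)
  obtain xs where xs: "walk T xs (parent T y) x" "length xs = Suc (dep T (parent T y) - dep T x)"
    using step.IH[OF step.prems] by blast
  have py: "parent T y \<in> verts T" using parent_in[OF step.prems step.hyps(2,3)] .
  have "adj T y (parent T y)" using step.hyps(2,3) py unfolding adj_def by blast
  then have "walk T (y # xs) y x" using walk_Cons xs(1) by metis
  moreover have "dep T x \<le> dep T (parent T y)" using anc_dep[OF step.hyps(1) step.prems] by blast
  moreover have "length (y # xs) = Suc (dep T y - dep T x)" using xs(2) dep_parent[OF step.prems step.hyps(2,3)] calculation(2) by simp
  ultimately show ?case by blast
qed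

lemma walk_down: "anc T a b \<Longrightarrow> phylo_tree T \<Longrightarrow> \<exists>xs. walk T xs a b \<and> length xs = Suc (dep T b - dep T a)"
proof (induction rule: anc.induct)
  case (refl x)
  have "walk T [x] x x" using refl(1) by (rule walk_single)
  then show ?case by (intro exI[of _ "[x]"]) simp
next
  case (step x y)
  obtain xs where xs: "walk T xs x (parent T y)" "length xs = Suc (dep T (parent T y) - dep T x)"
    using step.IH[OF step.prems] by blast
  have py: "parent T y \<in> verts T" using parent_in[OF step.prems step.hyps(2,3)] .
  have "adj T (parent T y) y" using step.hyps(2,3) py unfolding adj_def by blast
  then have "walk T (xs @ [y]) x y" using walk_snoc xs(1) by metis
  moreover have "dep T x \<le> dep T (parent T y)" using anc_dep[OF step.hyps(1) step.prems] by blast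
  moreover have "length (xs @ [y]) = Suc (dep T y - dep T x)" using xs(2) dep_parent[OF step.prems step.hyps(2,3)] calculation(2) by simp
  ultimately show ?case by blast
qed

lemma tdist_lower:
  assumes T: "phylo_tree T" and w: "walk T xs u v" "length xs = Suc n"
  shows "int (dep T v) - int (dep T u) \<le> int n" "int (dep T u) - int (dep T v) \<le> int n"
proof -
  have "\<bar>int (dep T u) - int (dep T v)\<bar> \<le> int (length xs) - 1" by (rule walk_lower[OF T w(1)])
  then show "int (dep T v) - int (dep T u) \<le> int n" "int (dep T u) - int (dep T v) \<le> int n"
    using w(2) by simp_all
qed

lemma tdist_eq:
  assumes T: "phylo_tree T" and w: "walk T xs u v" "length xs = Suc (dep T v - dep T u)"
    and le: "dep T u \<le> dep T v"
  shows "tdist T u v = dep T v - dep T u"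
  unfolding tdist_def
proof (rule Least_equality)
  show "\<exists>xs. walk T xs u v \<and> length xs = Suc (dep T v - dep T u)" using w by (intro exI[of _ xs]) simp
next
  fix n assume "\<exists>xs. walk T xs u v \<and> length xs = Suc n"
  then obtain ys where ys: "walk T ys u v" "length ys = Suc n" by (elim exE conjE)
  have "int (dep T v) - int (dep T u) \<le> int n" by (rule tdist_lower(1)[OF T ys])
  then show "dep T v - dep T u \<le> n" using le by linarith
qed

lemma tdist_eq2:
  assumes T: "phylo_tree T" and w: "walk T xs u v" "length xs = Suc (dep T u - dep T v)"
    and le: "dep T v \<le> dep T u"
  shows "tdist T u v = dep T u - dep T v"
  unfolding tdist_def
proof (rule Least_equality)
  show "\<exists>xs. walk T xs u v \<and> length xs = Suc (dep T u - dep T v)" using w by (intro exI[of _ xs]) simp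
next
  fix n assume "\<exists>xs. walk T xs u v \<and> length xs = Suc n"
  then obtain ys where ys: "walk T ys u v" "length ys = Suc n" by (elim exE conjE)
  have "int (dep T u) - int (dep T v) \<le> int n" by (rule tdist_lower(2)[OF T ys])
  then show "dep T u - dep T v \<le> n" using le by linarith
qed

lemma tdist_anc:
  assumes T: "phylo_tree T" and a: "anc T a b"
  shows "tdist T a b = dep T b - dep T a" "tdist T b a = dep T b - dep T a"
proof -
  have le: "dep T a \<le> dep T b" using anc_dep[OF a T] by blast
  obtain xs where "walk T xs a b" "length xs = Suc (dep T b - dep T a)" using walk_down[OF a T] by (elim exE conjE)
  then show "tdist T a b = dep T b - dep T a" by (rule tdist_eq[OF T _ _ le])
  obtain ys where "walk T ys b a" "length ys = Suc (dep T b - dep T a)" using walk_up[OF a T] by (elim exE conjE)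
  then show "tdist T b a = dep T b - dep T a" by (rule tdist_eq2[OF T _ _ le])
qed

lemma tdist_comp:
  assumes T: "phylo_tree T" and "anc T a c" "anc T b c"
  shows "int (tdist T a b) = \<bar>int (dep T a) - int (dep T b)\<bar>"
proof -
  from anc_comparable[OF assms(2,3)] show ?thesis
  proof
    assume h: "anc T a b"
    have "dep T a \<le> dep T b" using anc_dep[OF h T] by blast
    then show ?thesis using tdist_anc(1)[OF T h] by simp
  next
    assume h: "anc T b a"
    have "dep T b \<le> dep T a" using anc_dep[OF h T] by blast
    then show ?thesis using tdist_anc(2)[OF T h] by simp
  qed
qed

lemma leaf_below:
  assumes T: "phylo_tree T" and v: "v \<in> verts T"
  shows "\<exists>x\<in>leaves T. anc T v x"
proof -
  define S where "S = {x \<in> verts T. anc T v x}"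
  have fin: "finite S" using T unfolding S_def phylo_tree_def by simp
  have vS: "v \<in> S" using v unfolding S_def by (simp add: anc.refl)
  define k where "k = Max (dep T ` S)"
  have "k \<in> dep T ` S" unfolding k_def using fin vS by (intro Max_in) auto
  then obtain x where xS: "x \<in> S" and xk: "dep T x = k" by (elim imageE) simp
  have ge: "\<And>y. y \<in> S \<Longrightarrow> dep T y \<le> k" unfolding k_def using fin by (intro Max_ge) auto
  have "children T x = {}"
  proof (rule ccontr)
    assume "children T x \<noteq> {}"
    then obtain c where c: "c \<in> verts T" "c \<noteq> root T" "parent T c = x" unfolding children_def by blast
    have "anc T v x" using xS unfolding S_def by simp
    then have "anc T v c" using c anc.step[of T v c] by simp
    then have "c \<in> S" using c unfolding S_def by simp
    then have "dep T c \<le> k" by (rule ge)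
    moreover have "dep T c = Suc (dep T x)" using dep_parent[OF T c(1,2)] c(3) by simp
    ultimately show False using xk by simp
  qed
  moreover have "x \<in> verts T" "anc T v x" using xS unfolding S_def by simp_all
  ultimately show ?thesis unfolding leaves_def by blast
qed

lemma lca_prop:
  assumes T: "phylo_tree T" and L: "L \<subseteq> verts T" "L \<noteq> {}"
  shows "lca T L \<in> verts T \<and> (\<forall>x\<in>L. anc T (lca T L) x)
           \<and> (\<forall>w'\<in>verts T. (\<forall>x\<in>L. anc T w' x) \<longrightarrow> anc T w' (lca T L))"
proof -
  define CA where "CA = {w \<in> verts T. \<forall>x\<in>L. anc T w x}"
  have fin: "finite CA" using T unfolding CA_def phylo_tree_def by simp
  have rv: "root T \<in> verts T" using T by (simp add: phylo_tree_def)
  have "\<forall>x\<in>L. anc T (root T) x" using root_anc[OF T] L(1) by blast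
  then have rC: "root T \<in> CA" unfolding CA_def using rv by simp
  define k where "k = Max (dep T ` CA)"
  have "k \<in> dep T ` CA" unfolding k_def using fin rC by (intro Max_in) auto
  then obtain w where wC: "w \<in> CA" and wk: "dep T w = k" by (elim imageE) simp
  have ge: "\<And>y. y \<in> CA \<Longrightarrow> dep T y \<le> k" unfolding k_def using fin by (intro Max_ge) auto
  obtain x0 where x0: "x0 \<in> L" using L(2) by blast
  let ?Q = "\<lambda>w. w \<in> verts T \<and> (\<forall>x\<in>L. anc T w x) \<and> (\<forall>w'\<in>verts T. (\<forall>x\<in>L. anc T w' x) \<longrightarrow> anc T w' w)"
  have Qw: "?Q w"
  proof (intro conjI ballI impI)
    show "w \<in> verts T" using wC unfolding CA_def by simp
    show "\<And>x. x \<in> L \<Longrightarrow> anc T w x" using wC unfolding CA_def by simp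
    fix w' assume w': "w' \<in> verts T" "\<forall>x\<in>L. anc T w' x"
    then have "w' \<in> CA" unfolding CA_def by simp
    then have d: "dep T w' \<le> dep T w" using ge wk by simp
    have a1: "anc T w' x0" using w' x0 by simp
    have a2: "anc T w x0" using wC x0 unfolding CA_def by simp
    show "anc T w' w" by (rule anc_le_dep[OF T a1 a2 d])
  qed
  have "?Q (lca T L)" unfolding lca_def
  proof (rule theI[of ?Q w])
    show "?Q w" by (rule Qw)
  next
    fix y assume Qy: "?Q y"
    have yv: "y \<in> verts T" and yL: "\<forall>x\<in>L. anc T y x" using Qy by simp_all
    have wv: "w \<in> verts T" and wL: "\<forall>x\<in>L. anc T w x" using Qw by simp_all
    have "anc T y w" using Qw yv yL by simp
    moreover have "anc T w y" using Qy wv wL by simp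
    ultimately show "y = w" by (rule anc_antisym[OF T])
  qed
  then show ?thesis by blast
qed

lemma hp_P: "hp_triple P H \<phi> \<Longrightarrow> phylo_tree P" by (simp add: hp_triple_def)
lemma hp_H: "hp_triple P H \<phi> \<Longrightarrow> phylo_tree H" by (simp add: hp_triple_def)

lemma leaves_verts: "leaves T \<subseteq> verts T" by (auto simp: leaves_def)

lemma m_prop:
  assumes hp: "hp_triple P H \<phi>" and v: "v \<in> verts P"
  shows "mlca P H \<phi> v \<in> verts H \<and> (\<forall>x\<in>leaves P. anc P v x \<longrightarrow> anc H (mlca P H \<phi> v) (\<phi> x))
     \<and> (\<forall>w'\<in>verts H. (\<forall>x\<in>leaves P. anc P v x \<longrightarrow> anc H w' (\<phi> x)) \<longrightarrow> anc H w' (mlca P H \<phi> v))"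
proof -
  let ?L = "\<phi> ` {x \<in> leaves P. anc P v x}"
  have "?L \<subseteq> verts H" using hp leaves_verts[of H] unfolding hp_triple_def by blast
  moreover have "?L \<noteq> {}" using leaf_below[OF hp_P[OF hp] v] by blast
  ultimately have "lca H ?L \<in> verts H \<and> (\<forall>x\<in>?L. anc H (lca H ?L) x)
           \<and> (\<forall>w'\<in>verts H. (\<forall>x\<in>?L. anc H w' x) \<longrightarrow> anc H w' (lca H ?L))"
    by (rule lca_prop[OF hp_H[OF hp]])
  then show ?thesis unfolding mlca_def by blast
qed

lemma child_facts:
  assumes T: "phylo_tree T" and c: "c \<in> children T v"
  shows "c \<in> verts T" "c \<noteq> root T" "parent T c = v" "v \<in> verts T" "anc T v c"
proof -
  show c1: "c \<in> verts T" "c \<noteq> root T" "parent T c = v" using c unfolding children_def by auto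
  show "v \<in> verts T" using parent_in[OF T c1(1,2)] c1(3) by simp
  show "anc T v c" using anc_parent[OF T c1(1,2)] c1(3) by simp
qed

lemma parent_inner:
  assumes T: "phylo_tree T" and c: "c \<in> verts T" "c \<noteq> root T"
  shows "parent T c \<in> inner T" "c \<in> children T (parent T c)"
proof -
  show cc: "c \<in> children T (parent T c)" using c unfolding children_def by simp
  show "parent T c \<in> inner T" using cc parent_in[OF T c] unfolding inner_def leaves_def by blast
qed

lemma recon_anc:
  assumes hp: "hp_triple P H \<phi>" and psi: "\<psi> \<in> recon P H \<phi>"
  shows "anc P v y \<Longrightarrow> anc H (\<psi> v) (\<psi> y)"
proof (induction rule: anc.induct)
  case (refl x)
  have "\<psi> x \<in> verts H" using psi refl unfolding recon_def by blast
  then show ?case by (rule anc.refl)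
next
  case (step x y)
  have "parent P y \<in> inner P" "y \<in> children P (parent P y)" using parent_inner[OF hp_P[OF hp] step.hyps(2,3)] by auto
  then have "anc H (\<psi> (parent P y)) (\<psi> y)" using psi unfolding recon_def by blast
  then show ?case using step.IH by (rule anc_trans)
qed

lemma recon_m:
  assumes hp: "hp_triple P H \<phi>" and psi: "\<psi> \<in> recon P H \<phi>" and v: "v \<in> verts P"
  shows "anc H (\<psi> v) (mlca P H \<phi> v)"
proof -
  have "\<psi> v \<in> verts H" using psi v unfolding recon_def by blast
  moreover have "\<forall>x\<in>leaves P. anc P v x \<longrightarrow> anc H (\<psi> v) (\<phi> x)"
  proof (intro ballI impI)
    fix x assume "x \<in> leaves P" "anc P v x"
    then show "anc H (\<psi> v) (\<phi> x)" using recon_anc[OF hp psi, of v x] psi unfolding recon_def by simp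
  qed
  ultimately show ?thesis using m_prop[OF hp v] by blast
qed

lemma leaf_anc:
  assumes x: "x \<in> leaves T" and a: "anc T x y" shows "y = x"
proof (rule ccontr)
  assume "y \<noteq> x"
  then obtain c where "c \<in> verts T" "c \<noteq> root T" "parent T c = x" using sanc_child[OF a] by metis
  then have "c \<in> children T x" unfolding children_def by simp
  then show False using x unfolding leaves_def by blast
qed

lemma m_leaf:
  assumes hp: "hp_triple P H \<phi>" and x: "x \<in> leaves P"
  shows "mlca P H \<phi> x = \<phi> x"
proof -
  have xv: "x \<in> verts P" using x leaves_verts[of P] by blast
  have fx: "\<phi> x \<in> verts H" using hp x leaves_verts[of H] unfolding hp_triple_def by blast
  have "anc H (mlca P H \<phi> x) (\<phi> x)" using m_prop[OF hp xv] x anc.refl[OF xv] by blast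
  moreover have "\<forall>y\<in>leaves P. anc P x y \<longrightarrow> anc H (\<phi> x) (\<phi> y)"
    using leaf_anc[OF x] anc.refl[OF fx] by blast
  then have "anc H (\<phi> x) (mlca P H \<phi> x)" using m_prop[OF hp xv] fx by blast
  ultimately show ?thesis by (rule anc_antisym[OF hp_H[OF hp]])
qed

lemma m_child:
  assumes hp: "hp_triple P H \<phi>" and c: "c \<in> children P v"
  shows "anc H (mlca P H \<phi> v) (mlca P H \<phi> c)"
proof -
  have cf: "c \<in> verts P" "v \<in> verts P" "anc P v c" using child_facts[OF hp_P[OF hp] c] by auto
  have "\<forall>x\<in>leaves P. anc P c x \<longrightarrow> anc H (mlca P H \<phi> v) (\<phi> x)"
  proof (intro ballI impI)
    fix x assume "x \<in> leaves P" "anc P c x"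
    moreover then have "anc P v x" using anc_trans cf(3) by metis
    ultimately show "anc H (mlca P H \<phi> v) (\<phi> x)" using m_prop[OF hp cf(2)] by blast
  qed
  then show ?thesis using m_prop[OF hp cf(1)] m_prop[OF hp cf(2)] by blast
qed

lemma Aset_iff:
  assumes hp: "hp_triple P H \<phi>"
  shows "w \<in> Aset P H \<phi> v \<longleftrightarrow> anc H w (mlca P H \<phi> v)"
proof
  assume "anc H w (mlca P H \<phi> v)"
  moreover then have "w \<in> verts H" using anc_verts[OF _ hp_H[OF hp]] by blast
  ultimately show "w \<in> Aset P H \<phi> v" unfolding Aset_def using root_anc[OF hp_H[OF hp]] by blast
qed (simp add: Aset_def)

definition DI :: "'p rtree \<Rightarrow> 'h rtree \<Rightarrow> ('p \<Rightarrow> 'h) \<Rightarrow> ('p \<Rightarrow> 'h) \<Rightarrow> int" where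
  "DI P H \<psi> \<psi>' = (\<Sum>v\<in>verts P. \<bar>int (dep H (\<psi> v)) - int (dep H (\<psi>' v))\<bar>)"

lemma DI_nonneg: "0 \<le> DI P H \<psi> \<psi>'"
  unfolding DI_def by (rule sum_nonneg) simp

lemma DI_tri: "DI P H \<psi> \<psi>'' \<le> DI P H \<psi> \<psi>' + DI P H \<psi>' \<psi>''"
  unfolding DI_def sum.distrib[symmetric] by (rule sum_mono) linarith

lemma DI_upd:
  assumes fin: "finite (verts P)" and w: "w \<in> verts P"
  shows "DI P H (\<psi>(w := u)) \<psi>' = DI P H \<psi> \<psi>' - \<bar>int (dep H (\<psi> w)) - int (dep H (\<psi>' w))\<bar>
           + \<bar>int (dep H u) - int (dep H (\<psi>' w))\<bar>"
proof -
  let ?R = "(\<Sum>v\<in>verts P - {w}. \<bar>int (dep H (\<psi> v)) - int (dep H (\<psi>' v))\<bar>)"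
  have e: "(\<Sum>v\<in>verts P - {w}. \<bar>int (dep H ((\<psi>(w := u)) v)) - int (dep H (\<psi>' v))\<bar>) = ?R"
    by (rule sum.cong) auto
  have "DI P H (\<psi>(w := u)) \<psi>' = \<bar>int (dep H ((\<psi>(w := u)) w)) - int (dep H (\<psi>' w))\<bar> +
     (\<Sum>v\<in>verts P - {w}. \<bar>int (dep H ((\<psi>(w := u)) v)) - int (dep H (\<psi>' v))\<bar>)"
    unfolding DI_def by (rule sum.remove[OF fin w])
  then have 1: "DI P H (\<psi>(w := u)) \<psi>' = \<bar>int (dep H u) - int (dep H (\<psi>' w))\<bar> + ?R"
    unfolding e by simp
  have 2: "DI P H \<psi> \<psi>' = \<bar>int (dep H (\<psi> w)) - int (dep H (\<psi>' w))\<bar> + ?R"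
    unfolding DI_def by (rule sum.remove[OF fin w])
  show ?thesis using 1 2 by simp
qed

lemma DI_upd_left:
  assumes fin: "finite (verts P)" and w: "w \<in> verts P"
  shows "DI P H \<psi> (\<psi>(w := u)) = \<bar>int (dep H (\<psi> w)) - int (dep H u)\<bar>"
proof -
  have "DI P H \<psi> \<psi> = 0" unfolding DI_def by simp
  then have "DI P H (\<psi>(w := u)) \<psi> = \<bar>int (dep H u) - int (dep H (\<psi> w))\<bar>"
    using DI_upd[OF fin w, of H \<psi> u \<psi>] by simp
  moreover have "DI P H \<psi> (\<psi>(w := u)) = DI P H (\<psi>(w := u)) \<psi>" unfolding DI_def
    by (rule sum.cong) auto
  ultimately show ?thesis by simp
qed

lemma down_child:
  assumes hp: "hp_triple P H \<phi>" and psi: "\<psi> \<in> recon P H \<phi>" and w: "w \<in> verts P"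
    and s: "sanc H (\<psi> w) (mlca P H \<phi> w)"
  shows "(THE u. u \<in> Aset P H \<phi> w \<inter> children H (\<psi> w)) \<in> children H (\<psi> w)
       \<and> anc H (THE u. u \<in> Aset P H \<phi> w \<inter> children H (\<psi> w)) (mlca P H \<phi> w)"
proof -
  have H: "phylo_tree H" by (rule hp_H[OF hp])
  let ?m = "mlca P H \<phi> w"
  have a: "anc H (\<psi> w) ?m" "\<psi> w \<noteq> ?m" using s unfolding sanc_def by auto
  obtain c where c: "c \<in> verts H" "c \<noteq> root H" "parent H c = \<psi> w" "anc H c ?m"
    using sanc_child[OF a] by blast
  have cc: "c \<in> children H (\<psi> w)" using c unfolding children_def by simp
  have "(THE u. u \<in> Aset P H \<phi> w \<inter> children H (\<psi> w)) = c"
  proof (rule the_equality)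
    show "c \<in> Aset P H \<phi> w \<inter> children H (\<psi> w)" using cc c(4) Aset_iff[OF hp] by blast
  next
    fix u assume u: "u \<in> Aset P H \<phi> w \<inter> children H (\<psi> w)"
    then have ua: "anc H u ?m" and uc: "u \<in> children H (\<psi> w)" using Aset_iff[OF hp] by blast+
    have "u \<in> verts H" "u \<noteq> root H" "parent H u = \<psi> w" using uc unfolding children_def by auto
    then have "dep H u = dep H c" using dep_parent[OF H] c by metis
    then show "u = c" using anc_eq_dep[OF H ua c(4)] by blast
  qed
  then show ?thesis using cc c(4) by simp
qed

lemma step_shape:
  assumes hp: "hp_triple P H \<phi>" and st: "edit_step P H \<phi> \<psi> \<psi>'"
  shows "\<exists>w u. w \<in> verts P \<and> \<psi>' = \<psi>(w := u) \<and> (dep H u = Suc (dep H (\<psi> w)) \<or> dep H (\<psi> w) = Suc (dep H u))"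
proof -
  have H: "phylo_tree H" by (rule hp_H[OF hp])
  from st[unfolded edit_step_def] show ?thesis
  proof (elim disjE exE conjE)
    fix w assume ok: "up_ok P H \<phi> \<psi> w" and e: "\<psi>' = up_op H \<psi> w"
    have w: "w \<in> verts P" "\<psi> w \<noteq> root H" "\<psi> \<in> recon P H \<phi>" using ok unfolding up_ok_def by auto
    have "\<psi> w \<in> verts H" using w unfolding recon_def by blast
    then have "dep H (\<psi> w) = Suc (dep H (parent H (\<psi> w)))" using dep_parent[OF H] w(2) by blast
    then show ?thesis using w(1) e unfolding up_op_def by blast
  next
    fix w assume ok: "down_ok P H \<phi> \<psi> w" and e: "\<psi>' = down_op P H \<phi> \<psi> w"
    have w: "w \<in> verts P" "\<psi> \<in> recon P H \<phi>" "sanc H (\<psi> w) (mlca P H \<phi> w)"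
      using ok unfolding down_ok_def inner_def by auto
    let ?u = "THE u. u \<in> Aset P H \<phi> w \<inter> children H (\<psi> w)"
    have "?u \<in> children H (\<psi> w)" using down_child[OF hp w(2,1,3)] by blast
    then have "?u \<in> verts H" "?u \<noteq> root H" "parent H ?u = \<psi> w" unfolding children_def by auto
    then have "dep H ?u = Suc (dep H (\<psi> w))" using dep_parent[OF H] by metis
    then show ?thesis using w(1) e unfolding down_op_def by blast
  qed
qed

lemma step_DI:
  assumes hp: "hp_triple P H \<phi>" and st: "edit_step P H \<phi> \<psi> \<psi>'"
  shows "DI P H \<psi> \<psi>' \<le> 1"
proof -
  have fin: "finite (verts P)" using hp_P[OF hp] unfolding phylo_tree_def by simp
  obtain w u where wu: "w \<in> verts P" "\<psi>' = \<psi>(w := u)" "dep H u = Suc (dep H (\<psi> w)) \<or> dep H (\<psi> w) = Suc (dep H u)"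
    using step_shape[OF hp st] by blast
  show ?thesis using DI_upd_left[OF fin wu(1), of H \<psi> u] wu(2,3) by auto
qed

lemma lower_bound:
  assumes hp: "hp_triple P H \<phi>"
  shows "(edit_step P H \<phi> ^^ n) \<psi> \<psi>' \<Longrightarrow> DI P H \<psi> \<psi>' \<le> int n"
proof (induction n arbitrary: \<psi>')
  case 0 then have "\<psi>' = \<psi>" by simp
  then show ?case unfolding DI_def by simp
next
  case (Suc n)
  from Suc.prems obtain y where y: "(edit_step P H \<phi> ^^ n) \<psi> y" "edit_step P H \<phi> y \<psi>'"
    by (rule relpowp_Suc_E)
  have "DI P H \<psi> y \<le> int n" using Suc.IH[OF y(1)] .
  moreover have "DI P H y \<psi>' \<le> 1" using step_DI[OF hp y(2)] .
  ultimately show ?case using DI_tri[of P H \<psi> \<psi>' y] by simp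
qed

lemma child_dep: "phylo_tree T \<Longrightarrow> c \<in> children T v \<Longrightarrow> dep T c = Suc (dep T v)"
  using child_facts dep_parent by metis

lemma child_ne: "phylo_tree T \<Longrightarrow> c \<in> children T v \<Longrightarrow> c \<noteq> v"
  using child_dep by fastforce

lemma recon_edge:
  assumes hp: "hp_triple P H \<phi>" and psi: "\<psi> \<in> recon P H \<phi>" and c: "c \<in> verts P" "c \<noteq> root P"
  shows "anc H (\<psi> (parent P c)) (\<psi> c)"
proof -
  have "parent P c \<in> inner P" "c \<in> children P (parent P c)" using parent_inner[OF hp_P[OF hp] c] by auto
  then show ?thesis using psi unfolding recon_def by blast
qed

lemma recon_child:
  assumes hp: "hp_triple P H \<phi>" and psi: "\<psi> \<in> recon P H \<phi>" and c: "c \<in> children P v"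
  shows "anc H (\<psi> v) (\<psi> c)"
proof -
  have "c \<in> verts P" "c \<noteq> root P" "parent P c = v" using child_facts[OF hp_P[OF hp] c] by auto
  then show ?thesis using recon_edge[OF hp psi] by metis
qed

lemma recon_upd:
  assumes hp: "hp_triple P H \<phi>" and psi: "\<psi> \<in> recon P H \<phi>" and w: "w \<in> verts P" "w \<notin> leaves P"
    and u: "u \<in> verts H" and ch: "\<forall>v'\<in>children P w. anc H u (\<psi> v')"
    and pa: "w \<noteq> root P \<longrightarrow> anc H (\<psi> (parent P w)) u"
  shows "\<psi>(w := u) \<in> recon P H \<phi>"
  unfolding recon_def
proof (intro CollectI conjI ballI allI impI)
  have P: "phylo_tree P" by (rule hp_P[OF hp])
  fix v assume "v \<in> verts P" then show "(\<psi>(w := u)) v \<in> verts H" using psi u unfolding recon_def by auto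
next
  fix v assume "v \<notin> verts P" then show "(\<psi>(w := u)) v = undefined" using psi w unfolding recon_def by auto
next
  fix x assume "x \<in> leaves P" then show "(\<psi>(w := u)) x = \<phi> x" using psi w unfolding recon_def by auto
next
  have P: "phylo_tree P" by (rule hp_P[OF hp])
  fix v v' assume v: "v \<in> inner P" and v': "v' \<in> children P v"
  have ne: "v' \<noteq> v" using child_ne[OF P v'] .
  have cf: "v' \<in> verts P" "v' \<noteq> root P" "parent P v' = v" using child_facts[OF P v'] by auto
  have old: "anc H (\<psi> v) (\<psi> v')" using psi v v' unfolding recon_def by blast
  show "anc H ((\<psi>(w := u)) v) ((\<psi>(w := u)) v')"
  proof (cases "v = w")
    case True then show ?thesis using ch v' ne by simp
  next
    case False
    show ?thesis
    proof (cases "v' = w")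
      case True then show ?thesis using pa cf False by simp
    next
      case False2: False
      then show ?thesis using old False by simp
    qed
  qed
qed

lemma leaf_eq:
  assumes "\<psi> \<in> recon P H \<phi>" "\<psi>' \<in> recon P H \<phi>" "x \<in> leaves P"
  shows "\<psi> x = \<psi>' x"
  using assms unfolding recon_def by simp

lemma progress_down:
  assumes hp: "hp_triple P H \<phi>" and psi: "\<psi> \<in> recon P H \<phi>" and psi': "\<psi>' \<in> recon P H \<phi>"
    and w: "w \<in> verts P" "sanc H (\<psi> w) (\<psi>' w)"
    and nochild: "\<forall>v'\<in>children P w. \<not> sanc H (\<psi> v') (\<psi>' v')"
  shows "\<exists>\<psi>1. edit_step P H \<phi> \<psi> \<psi>1 \<and> \<psi>1 \<in> recon P H \<phi> \<and> DI P H \<psi>1 \<psi>' + 1 = DI P H \<psi> \<psi>'"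
proof -
  have P: "phylo_tree P" by (rule hp_P[OF hp])
  have H: "phylo_tree H" by (rule hp_H[OF hp])
  have fin: "finite (verts P)" using P unfolding phylo_tree_def by simp
  let ?m = "mlca P H \<phi> w"
  have s: "anc H (\<psi> w) (\<psi>' w)" "\<psi> w \<noteq> \<psi>' w" using w(2) unfolding sanc_def by auto
  have wl: "w \<notin> leaves P" using leaf_eq[OF psi psi'] s(2) by blast
  then have wi: "w \<in> inner P" using w(1) unfolding inner_def by simp
  have m': "anc H (\<psi>' w) ?m" by (rule recon_m[OF hp psi' w(1)])
  have am: "anc H (\<psi> w) ?m" by (rule anc_trans[OF m' s(1)])
  have nm: "\<psi> w \<noteq> ?m"
  proof
    assume "\<psi> w = ?m"
    then have "anc H (\<psi>' w) (\<psi> w)" using m' by simp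
    then show False using anc_antisym[OF H s(1)] s(2) by blast
  qed
  have sm: "sanc H (\<psi> w) ?m" using am nm unfolding sanc_def by simp
  have chne: "\<forall>v'\<in>children P w. \<psi> w \<noteq> \<psi> v'"
  proof (intro ballI notI)
    fix v' assume v': "v' \<in> children P w" and eq: "\<psi> w = \<psi> v'"
    have a1: "anc H (\<psi>' w) (\<psi>' v')" using recon_child[OF hp psi' v'] .
    have a2: "anc H (\<psi> v') (\<psi>' v')" using anc_trans[OF a1 s(1)] eq by simp
    have "\<psi> v' \<noteq> \<psi>' v'"
    proof
      assume "\<psi> v' = \<psi>' v'"
      then have "anc H (\<psi>' w) (\<psi> w)" using a1 eq by simp
      then show False using anc_antisym[OF H s(1)] s(2) by blast
    qed
    then have "sanc H (\<psi> v') (\<psi>' v')" using a2 unfolding sanc_def by simp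
    then show False using nochild v' by blast
  qed
  have ok: "down_ok P H \<phi> \<psi> w" unfolding down_ok_def using psi wi sm chne by blast
  let ?c = "THE u. u \<in> Aset P H \<phi> w \<inter> children H (\<psi> w)"
  have cprop: "?c \<in> children H (\<psi> w)" "anc H ?c ?m" using down_child[OF hp psi w(1) sm] by auto
  have cv: "?c \<in> verts H" "?c \<noteq> root H" "parent H ?c = \<psi> w" using cprop(1) unfolding children_def by auto
  have cdep: "dep H ?c = Suc (dep H (\<psi> w))" using dep_parent[OF H cv(1,2)] cv(3) by simp
  have ch: "\<forall>v'\<in>children P w. anc H ?c (\<psi> v')"
  proof
    fix v' assume v': "v' \<in> children P w"
    have a: "anc H (\<psi> w) (\<psi> v')" using recon_child[OF hp psi v'] .
    have ne: "\<psi> w \<noteq> \<psi> v'" using chne v' by blast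
    obtain c' where c': "c' \<in> verts H" "c' \<noteq> root H" "parent H c' = \<psi> w" "anc H c' (\<psi> v')"
      using sanc_child[OF a ne] by blast
    have v'v: "v' \<in> verts P" using child_facts[OF P v'] by simp
    have mm: "anc H ?m (mlca P H \<phi> v')" by (rule m_child[OF hp v'])
    have x1: "anc H c' (mlca P H \<phi> v')" using anc_trans[OF recon_m[OF hp psi v'v] c'(4)] .
    have x2: "anc H ?c (mlca P H \<phi> v')" using anc_trans[OF mm cprop(2)] .
    have "dep H c' = dep H ?c" using dep_parent[OF H c'(1,2)] c'(3) cdep by simp
    then have "c' = ?c" using anc_eq_dep[OF H x1 x2] by simp
    then show "anc H ?c (\<psi> v')" using c'(4) by simp
  qed
  have pa: "w \<noteq> root P \<longrightarrow> anc H (\<psi> (parent P w)) ?c"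
  proof
    assume "w \<noteq> root P"
    then have "anc H (\<psi> (parent P w)) (\<psi> w)" using recon_edge[OF hp psi w(1)] by blast
    moreover have "anc H (\<psi> w) ?c" using anc_parent[OF H cv(1,2)] cv(3) by simp
    ultimately show "anc H (\<psi> (parent P w)) ?c" using anc_trans by metis
  qed
  have rec: "\<psi>(w := ?c) \<in> recon P H \<phi>" by (rule recon_upd[OF hp psi w(1) wl cv(1) ch pa])
  have st: "edit_step P H \<phi> \<psi> (\<psi>(w := ?c))" unfolding edit_step_def down_op_def using ok by blast
  have "dep H (\<psi> w) < dep H (\<psi>' w)" using anc_dep[OF s(1) H] s(2) by blast
  then have "\<bar>int (dep H ?c) - int (dep H (\<psi>' w))\<bar> + 1 = \<bar>int (dep H (\<psi> w)) - int (dep H (\<psi>' w))\<bar>"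
    using cdep by simp
  then have "DI P H (\<psi>(w := ?c)) \<psi>' + 1 = DI P H \<psi> \<psi>'" using DI_upd[OF fin w(1), of H \<psi> ?c \<psi>'] by simp
  then show ?thesis using st rec by blast
qed

lemma progress_up:
  assumes hp: "hp_triple P H \<phi>" and psi: "\<psi> \<in> recon P H \<phi>" and psi': "\<psi>' \<in> recon P H \<phi>"
    and w: "w \<in> verts P" "sanc H (\<psi>' w) (\<psi> w)"
    and nopar: "w \<noteq> root P \<longrightarrow> \<not> sanc H (\<psi>' (parent P w)) (\<psi> (parent P w))"
  shows "\<exists>\<psi>1. edit_step P H \<phi> \<psi> \<psi>1 \<and> \<psi>1 \<in> recon P H \<phi> \<and> DI P H \<psi>1 \<psi>' + 1 = DI P H \<psi> \<psi>'"
proof -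
  have P: "phylo_tree P" by (rule hp_P[OF hp])
  have H: "phylo_tree H" by (rule hp_H[OF hp])
  have fin: "finite (verts P)" using P unfolding phylo_tree_def by simp
  have s: "anc H (\<psi>' w) (\<psi> w)" "\<psi>' w \<noteq> \<psi> w" using w(2) unfolding sanc_def by auto
  have wl: "w \<notin> leaves P" using leaf_eq[OF psi psi'] s(2) by metis
  have dlt: "dep H (\<psi>' w) < dep H (\<psi> w)" using anc_dep[OF s(1) H] s(2) by blast
  have nr: "\<psi> w \<noteq> root H" using dlt dep_root[of H] by auto
  have pwv: "\<psi> w \<in> verts H" using psi w(1) unfolding recon_def by blast
  let ?u = "parent H (\<psi> w)"
  have uv: "?u \<in> verts H" using parent_in[OF H pwv nr] .
  have udep: "dep H (\<psi> w) = Suc (dep H ?u)" using dep_parent[OF H pwv nr] .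
  have ua: "anc H ?u (\<psi> w)" using anc_parent[OF H pwv nr] .
  have pne: "w \<noteq> root P \<longrightarrow> \<psi> w \<noteq> \<psi> (parent P w)"
  proof (intro impI notI)
    assume wr: "w \<noteq> root P" and eq: "\<psi> w = \<psi> (parent P w)"
    have a1: "anc H (\<psi>' (parent P w)) (\<psi>' w)" using recon_edge[OF hp psi' w(1) wr] .
    have a2: "anc H (\<psi>' (parent P w)) (\<psi> (parent P w))" using anc_trans[OF s(1) a1] eq by simp
    have "\<psi>' (parent P w) \<noteq> \<psi> (parent P w)"
    proof
      assume "\<psi>' (parent P w) = \<psi> (parent P w)"
      then have "anc H (\<psi> w) (\<psi>' w)" using a1 eq by simp
      then show False using anc_antisym[OF H s(1)] s(2) by blast
    qed
    then have "sanc H (\<psi>' (parent P w)) (\<psi> (parent P w))" using a2 unfolding sanc_def by simp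
    then show False using nopar wr by blast
  qed
  have ok: "up_ok P H \<phi> \<psi> w" unfolding up_ok_def using psi w(1) nr pne by blast
  have ch: "\<forall>v'\<in>children P w. anc H ?u (\<psi> v')"
  proof
    fix v' assume v': "v' \<in> children P w"
    have a: "anc H (\<psi> w) (\<psi> v')" using recon_child[OF hp psi v'] .
    show "anc H ?u (\<psi> v')" using anc_trans[OF a ua] .
  qed
  have pa: "w \<noteq> root P \<longrightarrow> anc H (\<psi> (parent P w)) ?u"
  proof
    assume wr: "w \<noteq> root P"
    have a: "anc H (\<psi> (parent P w)) (\<psi> w)" using recon_edge[OF hp psi w(1) wr] .
    have "\<psi> (parent P w) \<noteq> \<psi> w" using pne wr by simp
    then show "anc H (\<psi> (parent P w)) ?u" using anc_inv[OF a] by blast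
  qed
  have rec: "\<psi>(w := ?u) \<in> recon P H \<phi>" by (rule recon_upd[OF hp psi w(1) wl uv ch pa])
  have st: "edit_step P H \<phi> \<psi> (\<psi>(w := ?u))" unfolding edit_step_def up_op_def using ok by blast
  have "\<bar>int (dep H ?u) - int (dep H (\<psi>' w))\<bar> + 1 = \<bar>int (dep H (\<psi> w)) - int (dep H (\<psi>' w))\<bar>"
    using udep dlt by simp
  then have "DI P H (\<psi>(w := ?u)) \<psi>' + 1 = DI P H \<psi> \<psi>'" using DI_upd[OF fin w(1), of H \<psi> ?u \<psi>'] by simp
  then show ?thesis using st rec by blast
qed

lemma recon_eq:
  assumes hp: "hp_triple P H \<phi>" and psi: "\<psi> \<in> recon P H \<phi>" and psi': "\<psi>' \<in> recon P H \<phi>"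
    and d: "\<forall>v\<in>verts P. dep H (\<psi> v) = dep H (\<psi>' v)"
  shows "\<psi> = \<psi>'"
proof
  fix v show "\<psi> v = \<psi>' v"
  proof (cases "v \<in> verts P")
    case True
    have "anc H (\<psi> v) (mlca P H \<phi> v)" "anc H (\<psi>' v) (mlca P H \<phi> v)"
      using recon_m[OF hp psi True] recon_m[OF hp psi' True] by auto
    moreover have "dep H (\<psi> v) = dep H (\<psi>' v)" using d True by blast
    ultimately show ?thesis using anc_eq_dep[OF hp_H[OF hp]] by metis
  next
    case False then show ?thesis using psi psi' unfolding recon_def by simp
  qed
qed

lemma DI_zero:
  assumes hp: "hp_triple P H \<phi>" and psi: "\<psi> \<in> recon P H \<phi>" and psi': "\<psi>' \<in> recon P H \<phi>"
    and z: "DI P H \<psi> \<psi>' = 0"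
  shows "\<psi> = \<psi>'"
proof -
  have fin: "finite (verts P)" using hp_P[OF hp] unfolding phylo_tree_def by simp
  have "\<forall>v\<in>verts P. \<bar>int (dep H (\<psi> v)) - int (dep H (\<psi>' v))\<bar> = 0"
  proof -
    have "sum (\<lambda>v. \<bar>int (dep H (\<psi> v)) - int (dep H (\<psi>' v))\<bar>) (verts P) = 0 \<longleftrightarrow>
       (\<forall>v\<in>verts P. \<bar>int (dep H (\<psi> v)) - int (dep H (\<psi>' v))\<bar> = 0)"
      by (rule sum_nonneg_eq_0_iff[OF fin]) simp
    then show ?thesis using z unfolding DI_def by simp
  qed
  then show ?thesis using recon_eq[OF hp psi psi'] by simp
qed

lemma progress:
  assumes hp: "hp_triple P H \<phi>" and psi: "\<psi> \<in> recon P H \<phi>" and psi': "\<psi>' \<in> recon P H \<phi>"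
    and ne: "\<psi> \<noteq> \<psi>'"
  shows "\<exists>\<psi>1. edit_step P H \<phi> \<psi> \<psi>1 \<and> \<psi>1 \<in> recon P H \<phi> \<and> DI P H \<psi>1 \<psi>' + 1 = DI P H \<psi> \<psi>'"
proof -
  have P: "phylo_tree P" by (rule hp_P[OF hp])
  have H: "phylo_tree H" by (rule hp_H[OF hp])
  have fin: "finite (verts P)" using P unfolding phylo_tree_def by simp
  define S where "S = {w \<in> verts P. sanc H (\<psi> w) (\<psi>' w)}"
  show ?thesis
  proof (cases "S = {}")
    case False
    have finS: "finite S" using fin unfolding S_def by simp
    define k where "k = Max (dep P ` S)"
    have "k \<in> dep P ` S" unfolding k_def using finS False by (intro Max_in) auto
    then obtain w where wS: "w \<in> S" and wk: "dep P w = k" by (elim imageE) simp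
    have ge: "\<And>y. y \<in> S \<Longrightarrow> dep P y \<le> k" unfolding k_def using finS by (intro Max_ge) auto
    have w: "w \<in> verts P" "sanc H (\<psi> w) (\<psi>' w)" using wS unfolding S_def by auto
    have "\<forall>v'\<in>children P w. \<not> sanc H (\<psi> v') (\<psi>' v')"
    proof (intro ballI notI)
      fix v' assume v': "v' \<in> children P w" and sv: "sanc H (\<psi> v') (\<psi>' v')"
      have "v' \<in> S" using sv child_facts[OF P v'] unfolding S_def by simp
      then have "dep P v' \<le> k" by (rule ge)
      then show False using child_dep[OF P v'] wk by simp
    qed
    then show ?thesis by (rule progress_down[OF hp psi psi' w])
  next
    case True
    obtain v where v: "\<psi> v \<noteq> \<psi>' v" using ne by blast
    have vv: "v \<in> verts P"
    proof (rule ccontr)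
      assume "v \<notin> verts P"
      then have "\<psi> v = undefined" "\<psi>' v = undefined" using psi psi' unfolding recon_def by auto
      then show False using v by simp
    qed
    have "anc H (\<psi> v) (mlca P H \<phi> v)" "anc H (\<psi>' v) (mlca P H \<phi> v)"
      using recon_m[OF hp psi vv] recon_m[OF hp psi' vv] by auto
    then have "anc H (\<psi> v) (\<psi>' v) \<or> anc H (\<psi>' v) (\<psi> v)" by (rule anc_comparable)
    moreover have "\<not> sanc H (\<psi> v) (\<psi>' v)" using True vv unfolding S_def by blast
    ultimately have sv: "sanc H (\<psi>' v) (\<psi> v)" using v unfolding sanc_def by auto
    define S' where "S' = {w \<in> verts P. sanc H (\<psi>' w) (\<psi> w)}"
    have finS: "finite S'" using fin unfolding S'_def by simp
    have neS: "S' \<noteq> {}" using sv vv unfolding S'_def by blast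
    define k where "k = Min (dep P ` S')"
    have "k \<in> dep P ` S'" unfolding k_def using finS neS by (intro Min_in) auto
    then obtain w where wS: "w \<in> S'" and wk: "dep P w = k" by (elim imageE) simp
    have le: "\<And>y. y \<in> S' \<Longrightarrow> k \<le> dep P y" unfolding k_def using finS by (intro Min_le) auto
    have w: "w \<in> verts P" "sanc H (\<psi>' w) (\<psi> w)" using wS unfolding S'_def by auto
    have "w \<noteq> root P \<longrightarrow> \<not> sanc H (\<psi>' (parent P w)) (\<psi> (parent P w))"
    proof (intro impI notI)
      assume wr: "w \<noteq> root P" and sp: "sanc H (\<psi>' (parent P w)) (\<psi> (parent P w))"
      have "parent P w \<in> S'" using sp parent_in[OF P w(1) wr] unfolding S'_def by simp
      then have "k \<le> dep P (parent P w)" by (rule le)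
      then show False using dep_parent[OF P w(1) wr] wk by simp
    qed
    then show ?thesis by (rule progress_up[OF hp psi psi' w])
  qed
qed

lemma upper_bound:
  assumes hp: "hp_triple P H \<phi>"
  shows "\<psi> \<in> recon P H \<phi> \<Longrightarrow> \<psi>' \<in> recon P H \<phi> \<Longrightarrow> DI P H \<psi> \<psi>' = int n \<Longrightarrow> (edit_step P H \<phi> ^^ n) \<psi> \<psi>'"
proof (induction n arbitrary: \<psi>)
  case 0
  then have "\<psi> = \<psi>'" using DI_zero[OF hp] by simp
  then show ?case by simp
next
  case (Suc n)
  have "\<psi> \<noteq> \<psi>'"
  proof
    assume "\<psi> = \<psi>'"
    then have "DI P H \<psi> \<psi>' = 0" unfolding DI_def by simp
    then show False using Suc.prems(3) by simp
  qed
  then obtain \<psi>1 where p: "edit_step P H \<phi> \<psi> \<psi>1" "\<psi>1 \<in> recon P H \<phi>" "DI P H \<psi>1 \<psi>' + 1 = DI P H \<psi> \<psi>'"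
    using progress[OF hp Suc.prems(1,2)] by blast
  have "DI P H \<psi>1 \<psi>' = int n" using p(3) Suc.prems(3) by simp
  then have "(edit_step P H \<phi> ^^ n) \<psi>1 \<psi>'" using Suc.IH[OF p(2) Suc.prems(2)] by simp
  then show ?case by (rule relpowp_Suc_I2[of "edit_step P H \<phi>" \<psi> \<psi>1 n \<psi>', OF p(1)])
qed

lemma d_edit_eq:
  assumes hp: "hp_triple P H \<phi>" and psi: "\<psi> \<in> recon P H \<phi>" and psi': "\<psi>' \<in> recon P H \<phi>"
  shows "int (d_edit P H \<phi> \<psi> \<psi>') = DI P H \<psi> \<psi>'"
proof -
  have "d_edit P H \<phi> \<psi> \<psi>' = nat (DI P H \<psi> \<psi>')"
    unfolding d_edit_def
  proof (rule Least_equality)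
    show "(edit_step P H \<phi> ^^ nat (DI P H \<psi> \<psi>')) \<psi> \<psi>'"
      using upper_bound[OF hp psi psi'] DI_nonneg[of P H \<psi> \<psi>'] by simp
  next
    fix n assume "(edit_step P H \<phi> ^^ n) \<psi> \<psi>'"
    then have "DI P H \<psi> \<psi>' \<le> int n" by (rule lower_bound[OF hp])
    then show "nat (DI P H \<psi> \<psi>') \<le> n" by simp
  qed
  then show ?thesis using DI_nonneg[of P H \<psi> \<psi>'] by simp
qed

lemma count_filter_upt:
  "length (filter R [1..<Suc l]) = card {i \<in> {1..l}. R i}"
proof -
  have "length (filter R [1..<Suc l]) = card (set (filter R [1..<Suc l]))"
    by (rule distinct_card[symmetric]) simp
  moreover have "set (filter R [1..<Suc l]) = {i \<in> {1..l}. R i}" by auto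
  ultimately show ?thesis by simp
qed

lemma sorted_count:
  assumes xs: "xs = sort (map g [1..<Suc l])"
  shows "card {i \<in> {1..l}. Q (g i)} = card {k. k < l \<and> Q (xs ! k)}"
proof -
  have "mset (filter Q xs) = mset (filter Q (map g [1..<Suc l]))" using xs by simp
  then have "length (filter Q xs) = length (filter Q (map g [1..<Suc l]))"
    by (metis size_mset)
  also have "\<dots> = length (filter (Q \<circ> g) [1..<Suc l])" by (simp add: filter_map)
  also have "\<dots> = card {i \<in> {1..l}. Q (g i)}" using count_filter_upt[of "Q \<circ> g" l] by simp
  finally have "card {i \<in> {1..l}. Q (g i)} = length (filter Q xs)" by simp
  also have "\<dots> = card {k. k < length xs \<and> Q (xs ! k)}" by (rule length_filter_conv_card)
  finally show ?thesis using xs by simp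
qed

lemma order_stat:
  assumes s: "sorted (xs :: real list)" and j: "j < length xs"
  shows "j + 1 \<le> card {k. k < length xs \<and> xs ! k \<le> xs ! j}"
        "card {k. k < length xs \<and> xs ! k < xs ! j} \<le> j"
proof -
  have sub1: "{..j} \<subseteq> {k. k < length xs \<and> xs ! k \<le> xs ! j}"
    using sorted_nth_mono[OF s] j by auto
  have "card {..j} \<le> card {k. k < length xs \<and> xs ! k \<le> xs ! j}" using card_mono[OF _ sub1] by simp
  then show "j + 1 \<le> card {k. k < length xs \<and> xs ! k \<le> xs ! j}" by simp
  have sub2: "{k. k < length xs \<and> xs ! k < xs ! j} \<subseteq> {..<j}"
  proof
    fix k assume k: "k \<in> {k. k < length xs \<and> xs ! k < xs ! j}"
    show "k \<in> {..<j}"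
    proof (rule ccontr)
      assume "k \<notin> {..<j}"
      then have "xs ! j \<le> xs ! k" using sorted_nth_mono[OF s] k by simp
      then show False using k by simp
    qed
  qed
  have "card {k. k < length xs \<and> xs ! k < xs ! j} \<le> card {..<j}" using card_mono[OF _ sub2] by simp
  then show "card {k. k < length xs \<and> xs ! k < xs ! j} \<le> j" by simp
qed

lemma zmed_char:
  fixes n :: "nat \<Rightarrow> int"
  assumes l: "l \<ge> 1"
  shows "\<exists>a b. a \<le> b \<and> zmed (image_mset n (mset [1..<Suc l])) = (a + b + 1) div 2
     \<and> (l - 1) div 2 + 1 \<le> card {i \<in> {1..l}. n i \<le> a}
     \<and> card {i \<in> {1..l}. n i < a} \<le> (l - 1) div 2
     \<and> l div 2 + 1 \<le> card {i \<in> {1..l}. n i \<le> b}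
     \<and> card {i \<in> {1..l}. n i < b} \<le> l div 2
     \<and> (\<exists>i\<in>{1..l}. n i = a) \<and> (\<exists>i\<in>{1..l}. n i = b)"
proof -
  define g where "g i = real_of_int (n i)" for i
  define xs where "xs = sort (map g [1..<Suc l])"
  have M: "image_mset real_of_int (image_mset n (mset [1..<Suc l])) = mset (map g [1..<Suc l])"
    unfolding g_def by (simp add: multiset.map_comp comp_def)
  have sl: "sorted_list_of_multiset (mset (map g [1..<Suc l])) = xs" unfolding xs_def by (rule sorted_list_of_multiset_mset)
  have len: "length xs = l" unfolding xs_def by simp
  have s: "sorted xs" unfolding xs_def by simp
  define lo where "lo = (l - 1) div 2"
  define hi where "hi = l div 2"
  have lol: "lo < l" "hi < l" "lo \<le> hi" using l unfolding lo_def hi_def by auto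
  have mem: "\<And>j. j < l \<Longrightarrow> \<exists>i\<in>{1..l}. xs ! j = g i"
  proof -
    fix j assume "j < l"
    then have "xs ! j \<in> set xs" using len by simp
    then have "xs ! j \<in> set (map g [1..<Suc l])" unfolding xs_def by simp
    then show "\<exists>i\<in>{1..l}. xs ! j = g i" by auto
  qed
  obtain ia where ia: "ia \<in> {1..l}" "xs ! lo = g ia" using mem lol by blast
  obtain ib where ib: "ib \<in> {1..l}" "xs ! hi = g ib" using mem lol by blast
  define a where "a = n ia"
  define b where "b = n ib"
  have xa: "xs ! lo = real_of_int a" and xb: "xs ! hi = real_of_int b" using ia ib unfolding a_def b_def g_def by simp_all
  have "xs ! lo \<le> xs ! hi" using sorted_nth_mono[OF s] lol len by simp
  then have ab: "a \<le> b" using xa xb by simp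
  have med: "med (mset (map g [1..<Suc l])) = (real_of_int a + real_of_int b) / 2"
  proof (cases "odd l")
    case True
    then have "lo = hi" unfolding lo_def hi_def by presburger
    then show ?thesis using True xa xb l unfolding med_def Let_def sl by (simp add: hi_def)
  next
    case False
    then have "l div 2 - 1 = lo" unfolding lo_def using l by presburger
    then show ?thesis using False xa xb l unfolding med_def Let_def sl hi_def by simp
  qed
  have "zmed (image_mset n (mset [1..<Suc l])) = \<lfloor>(real_of_int a + real_of_int b) / 2 + 1 / 2\<rfloor>"
    unfolding zmed_def nearest_int_def M med ..
  also have "(real_of_int a + real_of_int b) / 2 + 1 / 2 = real_of_int (a + b + 1) / real_of_int 2" by simp
  also have "\<lfloor>real_of_int (a + b + 1) / real_of_int 2\<rfloor> = (a + b + 1) div 2" by (rule floor_divide_of_int_eq)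
  finally have z: "zmed (image_mset n (mset [1..<Suc l])) = (a + b + 1) div 2" .
  have c1: "card {i \<in> {1..l}. g i \<le> xs ! lo} = card {k. k < l \<and> xs ! k \<le> xs ! lo}"
    by (rule sorted_count[OF xs_def])
  have c2: "card {i \<in> {1..l}. g i < xs ! hi} = card {k. k < l \<and> xs ! k < xs ! hi}"
    by (rule sorted_count[OF xs_def])
  have "lo + 1 \<le> card {k. k < l \<and> xs ! k \<le> xs ! lo}" using order_stat(1)[OF s, of lo] len lol by simp
  moreover have "{i \<in> {1..l}. g i \<le> xs ! lo} = {i \<in> {1..l}. n i \<le> a}" using xa unfolding g_def by simp
  ultimately have d1: "lo + 1 \<le> card {i \<in> {1..l}. n i \<le> a}" using c1 by simp
  have "card {k. k < l \<and> xs ! k < xs ! hi} \<le> hi" using order_stat(2)[OF s, of hi] len lol by simp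
  moreover have "{i \<in> {1..l}. g i < xs ! hi} = {i \<in> {1..l}. n i < b}" using xb unfolding g_def by simp
  ultimately have d2: "card {i \<in> {1..l}. n i < b} \<le> hi" using c2 by simp
  have c3: "card {i \<in> {1..l}. g i < xs ! lo} = card {k. k < l \<and> xs ! k < xs ! lo}"
    by (rule sorted_count[OF xs_def])
  have c4: "card {i \<in> {1..l}. g i \<le> xs ! hi} = card {k. k < l \<and> xs ! k \<le> xs ! hi}"
    by (rule sorted_count[OF xs_def])
  have "card {k. k < l \<and> xs ! k < xs ! lo} \<le> lo" using order_stat(2)[OF s, of lo] len lol by simp
  moreover have "{i \<in> {1..l}. g i < xs ! lo} = {i \<in> {1..l}. n i < a}" using xa unfolding g_def by simp
  ultimately have d3: "card {i \<in> {1..l}. n i < a} \<le> lo" using c3 by simp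
  have "hi + 1 \<le> card {k. k < l \<and> xs ! k \<le> xs ! hi}" using order_stat(1)[OF s, of hi] len lol by simp
  moreover have "{i \<in> {1..l}. g i \<le> xs ! hi} = {i \<in> {1..l}. n i \<le> b}" using xb unfolding g_def by simp
  ultimately have d4: "hi + 1 \<le> card {i \<in> {1..l}. n i \<le> b}" using c4 by simp
  show ?thesis using ab z d1 d2 d3 d4 ia ib unfolding lo_def hi_def a_def b_def by blast
qed

lemma stat_mono:
  fixes n n' :: "nat \<Rightarrow> int"
  assumes I: "finite I" and c1: "j + 1 \<le> card {i \<in> I. n i \<le> s}" and c2: "card {i \<in> I. n' i < s'} \<le> j"
    and le: "\<forall>i\<in>I. n' i \<le> n i + k"
  shows "s' \<le> s + k"
proof (rule ccontr)
  assume "\<not> s' \<le> s + k"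
  then have sub: "{i \<in> I. n i \<le> s} \<subseteq> {i \<in> I. n' i < s'}"
  proof (intro subsetI)
    fix i assume ns: "\<not> s' \<le> s + k" and i: "i \<in> {i \<in> I. n i \<le> s}"
    then have "n' i \<le> n i + k" using le by simp
    then show "i \<in> {i \<in> I. n' i < s'}" using ns i by simp
  qed
  have "card {i \<in> I. n i \<le> s} \<le> card {i \<in> I. n' i < s'}" using card_mono[OF _ sub] I by simp
  then show False using c1 c2 by simp
qed

lemma Z_mono:
  fixes n n' :: "nat \<Rightarrow> int"
  assumes l: "l \<ge> 1" and le: "\<forall>i\<in>{1..l}. n' i \<le> n i + k"
  shows "zmed (image_mset n' (mset [1..<Suc l])) \<le> zmed (image_mset n (mset [1..<Suc l])) + k"
proof -
  obtain a b where ab: "a \<le> b" "zmed (image_mset n (mset [1..<Suc l])) = (a + b + 1) div 2"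
     "(l - 1) div 2 + 1 \<le> card {i \<in> {1..l}. n i \<le> a}"
     "l div 2 + 1 \<le> card {i \<in> {1..l}. n i \<le> b}"
    using zmed_char[OF l, of n] by blast
  obtain a' b' where ab': "zmed (image_mset n' (mset [1..<Suc l])) = (a' + b' + 1) div 2"
     "card {i \<in> {1..l}. n' i < a'} \<le> (l - 1) div 2"
     "card {i \<in> {1..l}. n' i < b'} \<le> l div 2"
    using zmed_char[OF l, of n'] by blast
  have "a' \<le> a + k" by (rule stat_mono[OF _ ab(3) ab'(2) le]) simp
  moreover have "b' \<le> b + k" by (rule stat_mono[OF _ ab(4) ab'(3) le]) simp
  ultimately show ?thesis using ab(2) ab'(1) by presburger
qed

lemma Z_bounds:
  fixes n :: "nat \<Rightarrow> int"
  assumes l: "l \<ge> 1"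
  shows "\<exists>i\<in>{1..l}. n i \<le> zmed (image_mset n (mset [1..<Suc l]))"
        "\<exists>i\<in>{1..l}. zmed (image_mset n (mset [1..<Suc l])) \<le> n i"
proof -
  obtain a b where ab: "a \<le> b" "zmed (image_mset n (mset [1..<Suc l])) = (a + b + 1) div 2"
     "\<exists>i\<in>{1..l}. n i = a" "\<exists>i\<in>{1..l}. n i = b"
    using zmed_char[OF l, of n] by blast
  have "a \<le> (a + b + 1) div 2" "(a + b + 1) div 2 \<le> b" using ab(1) by presburger+
  then show "\<exists>i\<in>{1..l}. n i \<le> zmed (image_mset n (mset [1..<Suc l]))"
        "\<exists>i\<in>{1..l}. zmed (image_mset n (mset [1..<Suc l])) \<le> n i" using ab by auto
qed

lemma sum_if_pm:
  fixes d :: int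
  assumes I: "finite I"
  shows "(\<Sum>i\<in>I. if P i then d else - d) = d * int (card {i \<in> I. P i}) - d * int (card {i \<in> I. \<not> P i})"
proof -
  have "(\<Sum>i\<in>I. if P i then d else - d) = sum (\<lambda>_. d) (I \<inter> {i. P i}) + sum (\<lambda>_. - d) (I \<inter> - {i. P i})"
    by (rule sum.If_cases[OF I])
  moreover have "I \<inter> {i. P i} = {i \<in> I. P i}" "I \<inter> - {i. P i} = {i \<in> I. \<not> P i}" by auto
  ultimately show ?thesis by (simp add: algebra_simps)
qed

lemma card_split:
  assumes I: "finite I"
  shows "card {i \<in> I. P i} + card {i \<in> I. \<not> P i} = card I"
proof -
  have "{i \<in> I. P i} \<union> {i \<in> I. \<not> P i} = I" by auto
  moreover have "card ({i \<in> I. P i} \<union> {i \<in> I. \<not> P i}) = card {i \<in> I. P i} + card {i \<in> I. \<not> P i}"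
    by (rule card_Un_disjoint) (use I in auto)
  ultimately show ?thesis by simp
qed

lemma median_opt:
  fixes n :: "nat \<Rightarrow> int" and z x :: int
  assumes I: "finite I" and c1: "card {i \<in> I. n i < z} \<le> h" and c2: "card {i \<in> I. z < n i} \<le> h"
    and h: "2 * h \<le> card I"
  shows "(\<Sum>i\<in>I. \<bar>z - n i\<bar>) \<le> (\<Sum>i\<in>I. \<bar>x - n i\<bar>)"
proof (cases "z \<le> x")
  case True
  let ?d = "x - z"
  have "(\<Sum>i\<in>I. \<bar>z - n i\<bar> + (if n i \<le> z then ?d else - ?d)) \<le> (\<Sum>i\<in>I. \<bar>x - n i\<bar>)"
    by (rule sum_mono) (use True in auto)
  moreover have "(\<Sum>i\<in>I. \<bar>z - n i\<bar> + (if n i \<le> z then ?d else - ?d)) =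
     (\<Sum>i\<in>I. \<bar>z - n i\<bar>) + (?d * int (card {i \<in> I. n i \<le> z}) - ?d * int (card {i \<in> I. \<not> n i \<le> z}))"
    unfolding sum.distrib sum_if_pm[OF I] ..
  moreover have "card {i \<in> I. \<not> n i \<le> z} \<le> card {i \<in> I. n i \<le> z}"
  proof -
    have "{i \<in> I. \<not> n i \<le> z} = {i \<in> I. z < n i}" by auto
    then show ?thesis using card_split[OF I, of "\<lambda>i. n i \<le> z"] c2 h by simp
  qed
  then have "0 \<le> ?d * int (card {i \<in> I. n i \<le> z}) - ?d * int (card {i \<in> I. \<not> n i \<le> z})"
    using True by (simp add: right_diff_distrib[symmetric])
  ultimately show ?thesis by linarith
next
  case False
  let ?d = "z - x"
  have "(\<Sum>i\<in>I. \<bar>z - n i\<bar> + (if z \<le> n i then ?d else - ?d)) \<le> (\<Sum>i\<in>I. \<bar>x - n i\<bar>)"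
    by (rule sum_mono) (use False in auto)
  moreover have "(\<Sum>i\<in>I. \<bar>z - n i\<bar> + (if z \<le> n i then ?d else - ?d)) =
     (\<Sum>i\<in>I. \<bar>z - n i\<bar>) + (?d * int (card {i \<in> I. z \<le> n i}) - ?d * int (card {i \<in> I. \<not> z \<le> n i}))"
    unfolding sum.distrib sum_if_pm[OF I] ..
  moreover have "card {i \<in> I. \<not> z \<le> n i} \<le> card {i \<in> I. z \<le> n i}"
  proof -
    have "{i \<in> I. \<not> z \<le> n i} = {i \<in> I. n i < z}" by auto
    then show ?thesis using card_split[OF I, of "\<lambda>i. z \<le> n i"] c1 h by simp
  qed
  then have "0 \<le> ?d * int (card {i \<in> I. z \<le> n i}) - ?d * int (card {i \<in> I. \<not> z \<le> n i})"
    using False by (simp add: right_diff_distrib[symmetric])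
  ultimately show ?thesis by linarith
qed

lemma Z_opt:
  fixes n :: "nat \<Rightarrow> int" and x :: int
  assumes l: "l \<ge> 1"
  shows "(\<Sum>i=1..l. \<bar>zmed (image_mset n (mset [1..<Suc l])) - n i\<bar>) \<le> (\<Sum>i=1..l. \<bar>x - n i\<bar>)"
proof -
  obtain a b where ab: "a \<le> b" "zmed (image_mset n (mset [1..<Suc l])) = (a + b + 1) div 2"
     "(l - 1) div 2 + 1 \<le> card {i \<in> {1..l}. n i \<le> a}"
     "card {i \<in> {1..l}. n i < b} \<le> l div 2"
    using zmed_char[OF l, of n] by blast
  define z where "z = zmed (image_mset n (mset [1..<Suc l]))"
  have za: "a \<le> z" "z \<le> b" using ab(1,2) unfolding z_def by presburger+
  have "{i \<in> {1..l}. n i < z} \<subseteq> {i \<in> {1..l}. n i < b}" using za by auto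
  then have "card {i \<in> {1..l}. n i < z} \<le> card {i \<in> {1..l}. n i < b}" using card_mono[of "{i \<in> {1..l}. n i < b}"] by simp
  then have c1: "card {i \<in> {1..l}. n i < z} \<le> l div 2" using ab(4) by simp
  have "{i \<in> {1..l}. z < n i} \<subseteq> {i \<in> {1..l}. \<not> n i \<le> a}" using za by auto
  then have "card {i \<in> {1..l}. z < n i} \<le> card {i \<in> {1..l}. \<not> n i \<le> a}" using card_mono[of "{i \<in> {1..l}. \<not> n i \<le> a}"] by simp
  moreover have "card {i \<in> {1..l}. n i \<le> a} + card {i \<in> {1..l}. \<not> n i \<le> a} = l"
    using card_split[of "{1..l}" "\<lambda>i. n i \<le> a"] by simp
  ultimately have c2: "card {i \<in> {1..l}. z < n i} \<le> l div 2" using ab(3) l by linarith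
  have "(\<Sum>i\<in>{1..l}. \<bar>z - n i\<bar>) \<le> (\<Sum>i\<in>{1..l}. \<bar>x - n i\<bar>)"
    by (rule median_opt[OF _ c1 c2]) simp_all
  then show ?thesis unfolding z_def .
qed

definition zv where
  "zv P H \<phi> \<Psi> l v = zmed (image_mset (\<lambda>i. int (tdist H (mlca P H \<phi> v) (\<Psi> i v))) (mset [1..<Suc l]))"

lemma nv_eq:
  assumes hp: "hp_triple P H \<phi>" and psi: "\<psi> \<in> recon P H \<phi>" and v: "v \<in> verts P"
  shows "int (tdist H (mlca P H \<phi> v) (\<psi> v)) = int (dep H (mlca P H \<phi> v)) - int (dep H (\<psi> v))"
proof -
  have a: "anc H (\<psi> v) (mlca P H \<phi> v)" by (rule recon_m[OF hp psi v])
  have "dep H (\<psi> v) \<le> dep H (mlca P H \<phi> v)" using anc_dep[OF a hp_H[OF hp]] by blast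
  then show ?thesis using tdist_anc(2)[OF hp_H[OF hp] a] by simp
qed

lemma pm_prop:
  assumes hp: "hp_triple P H \<phi>" and l: "l \<ge> 1" and Psi: "\<forall>i \<in> {1..l}. \<Psi> i \<in> recon P H \<phi>"
    and v: "v \<in> verts P"
  shows "anc H (psi_med P H \<phi> \<Psi> l v) (mlca P H \<phi> v) \<and>
         int (dep H (psi_med P H \<phi> \<Psi> l v)) = int (dep H (mlca P H \<phi> v)) - zv P H \<phi> \<Psi> l v"
proof -
  have H: "phylo_tree H" by (rule hp_H[OF hp])
  let ?m = "mlca P H \<phi> v"
  let ?z = "zv P H \<phi> \<Psi> l v"
  let ?n = "\<lambda>i. int (tdist H ?m (\<Psi> i v))"
  have mv: "?m \<in> verts H" using m_prop[OF hp v] by blast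
  obtain i1 where i1: "i1 \<in> {1..l}" "?n i1 \<le> ?z" using Z_bounds(1)[OF l, of ?n] unfolding zv_def by blast
  obtain i2 where i2: "i2 \<in> {1..l}" "?z \<le> ?n i2" using Z_bounds(2)[OF l, of ?n] unfolding zv_def by blast
  have z0: "0 \<le> ?z" using i1 by simp
  have "?n i2 = int (dep H ?m) - int (dep H (\<Psi> i2 v))" using nv_eq[OF hp _ v] Psi i2(1) by blast
  then have zm: "?z \<le> int (dep H ?m)" using i2 by simp
  obtain w where w: "anc H w ?m" "dep H w = dep H ?m - nat ?z"
    using anc_at_dep[OF H root_anc[OF H mv] HOL.refl, of "dep H ?m - nat ?z"] by auto
  have wd: "int (dep H w) = int (dep H ?m) - ?z" using w(2) z0 zm by simp
  have Q: "w \<in> Aset P H \<phi> v \<and> int (tdist H ?m w) = ?z"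
  proof
    show "w \<in> Aset P H \<phi> v" using Aset_iff[OF hp] w(1) by blast
    have "dep H w \<le> dep H ?m" using anc_dep[OF w(1) H] by blast
    then show "int (tdist H ?m w) = ?z" using tdist_anc(2)[OF H w(1)] wd by simp
  qed
  have "psi_med P H \<phi> \<Psi> l v = w"
    unfolding psi_med_def zv_def[symmetric] using v
  proof (simp only: if_True)
    show "(THE w. w \<in> Aset P H \<phi> v \<and> int (tdist H ?m w) = ?z) = w"
    proof (rule the_equality)
      show "w \<in> Aset P H \<phi> v \<and> int (tdist H ?m w) = ?z" by (rule Q)
    next
      fix w' assume w': "w' \<in> Aset P H \<phi> v \<and> int (tdist H ?m w') = ?z"
      then have a': "anc H w' ?m" using Aset_iff[OF hp] by blast
      have "dep H w' \<le> dep H ?m" using anc_dep[OF a' H] by blast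
      then have "int (dep H w') = int (dep H ?m) - ?z" using tdist_anc(2)[OF H a'] w' by simp
      then have "dep H w' = dep H w" using wd by simp
      then show "w' = w" using anc_eq_dep[OF H a' w(1)] by simp
    qed
  qed
  then show ?thesis using w(1) wd by simp
qed

lemma pm_recon:
  assumes hp: "hp_triple P H \<phi>" and l: "l \<ge> 1" and Psi: "\<forall>i \<in> {1..l}. \<Psi> i \<in> recon P H \<phi>"
  shows "psi_med P H \<phi> \<Psi> l \<in> recon P H \<phi>"
  unfolding recon_def
proof (intro CollectI conjI ballI allI impI)
  have H: "phylo_tree H" by (rule hp_H[OF hp])
  have P: "phylo_tree P" by (rule hp_P[OF hp])
  fix v assume v: "v \<in> verts P"
  show "psi_med P H \<phi> \<Psi> l v \<in> verts H" using pm_prop[OF hp l Psi v] anc_verts[OF _ H] by blast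
next
  fix v assume "v \<notin> verts P" then show "psi_med P H \<phi> \<Psi> l v = undefined" unfolding psi_med_def by simp
next
  have H: "phylo_tree H" by (rule hp_H[OF hp])
  fix x assume x: "x \<in> leaves P"
  have xv: "x \<in> verts P" using x leaves_verts[of P] by blast
  let ?m = "mlca P H \<phi> x"
  let ?n = "\<lambda>i. int (tdist H ?m (\<Psi> i x))"
  have mx: "?m = \<phi> x" by (rule m_leaf[OF hp x])
  have n0: "\<forall>i\<in>{1..l}. ?n i = 0"
  proof
    fix i assume i: "i \<in> {1..l}"
    have "\<Psi> i x = \<phi> x" using Psi i x unfolding recon_def by blast
    then show "?n i = 0" using nv_eq[OF hp _ xv, of "\<Psi> i"] Psi i mx by simp
  qed
  obtain i1 where i1: "i1 \<in> {1..l}" "?n i1 \<le> zv P H \<phi> \<Psi> l x" using Z_bounds(1)[OF l, of ?n] unfolding zv_def by blast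
  obtain i2 where i2: "i2 \<in> {1..l}" "zv P H \<phi> \<Psi> l x \<le> ?n i2" using Z_bounds(2)[OF l, of ?n] unfolding zv_def by blast
  have "zv P H \<phi> \<Psi> l x = 0" using i1 i2 n0 by force
  then have pp: "anc H (psi_med P H \<phi> \<Psi> l x) ?m" "dep H (psi_med P H \<phi> \<Psi> l x) = dep H ?m"
    using pm_prop[OF hp l Psi xv] by auto
  have mv: "?m \<in> verts H" using m_prop[OF hp xv] by blast
  have "psi_med P H \<phi> \<Psi> l x = ?m" using anc_eq_dep[OF H pp(1) anc.refl[OF mv] pp(2)] .
  then show "psi_med P H \<phi> \<Psi> l x = \<phi> x" using mx by simp
next
  have H: "phylo_tree H" by (rule hp_H[OF hp])
  have P: "phylo_tree P" by (rule hp_P[OF hp])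
  fix v v' assume vi: "v \<in> inner P" and v': "v' \<in> children P v"
  have vv: "v' \<in> verts P" "v \<in> verts P" using child_facts[OF P v'] by auto
  let ?m = "mlca P H \<phi> v" and ?m' = "mlca P H \<phi> v'"
  let ?n = "\<lambda>i. int (tdist H ?m (\<Psi> i v))" and ?n' = "\<lambda>i. int (tdist H ?m' (\<Psi> i v'))"
  let ?k = "int (dep H ?m') - int (dep H ?m)"
  have le: "\<forall>i\<in>{1..l}. ?n' i \<le> ?n i + ?k"
  proof
    fix i assume i: "i \<in> {1..l}"
    have r: "\<Psi> i \<in> recon P H \<phi>" using Psi i by blast
    have "dep H (\<Psi> i v) \<le> dep H (\<Psi> i v')" using anc_dep[OF recon_child[OF hp r v'] H] by blast
    then show "?n' i \<le> ?n i + ?k" using nv_eq[OF hp r vv(1)] nv_eq[OF hp r vv(2)] by simp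
  qed
  have zz: "zv P H \<phi> \<Psi> l v' \<le> zv P H \<phi> \<Psi> l v + ?k" using Z_mono[OF l le] unfolding zv_def .
  have p1: "anc H (psi_med P H \<phi> \<Psi> l v) ?m" "int (dep H (psi_med P H \<phi> \<Psi> l v)) = int (dep H ?m) - zv P H \<phi> \<Psi> l v"
    using pm_prop[OF hp l Psi vv(2)] by auto
  have p2: "anc H (psi_med P H \<phi> \<Psi> l v') ?m'" "int (dep H (psi_med P H \<phi> \<Psi> l v')) = int (dep H ?m') - zv P H \<phi> \<Psi> l v'"
    using pm_prop[OF hp l Psi vv(1)] by auto
  have a1: "anc H (psi_med P H \<phi> \<Psi> l v) ?m'" using anc_trans[OF m_child[OF hp v'] p1(1)] .
  have "dep H (psi_med P H \<phi> \<Psi> l v) \<le> dep H (psi_med P H \<phi> \<Psi> l v')" using p1(2) p2(2) zz by simp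
  then show "anc H (psi_med P H \<phi> \<Psi> l v) (psi_med P H \<phi> \<Psi> l v')" using anc_le_dep[OF H a1 p2(1)] by blast
qed

lemma per_vertex:
  assumes hp: "hp_triple P H \<phi>" and l: "l \<ge> 1" and Psi: "\<forall>i \<in> {1..l}. \<Psi> i \<in> recon P H \<phi>"
    and psi: "\<psi> \<in> recon P H \<phi>" and v: "v \<in> verts P"
  shows "(\<Sum>i=1..l. \<bar>int (dep H (psi_med P H \<phi> \<Psi> l v)) - int (dep H (\<Psi> i v))\<bar>)
       \<le> (\<Sum>i=1..l. \<bar>int (dep H (\<psi> v)) - int (dep H (\<Psi> i v))\<bar>)"
proof -
  let ?m = "mlca P H \<phi> v"
  let ?n = "\<lambda>i. int (tdist H ?m (\<Psi> i v))"
  let ?z = "zv P H \<phi> \<Psi> l v"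
  let ?x = "int (dep H ?m) - int (dep H (\<psi> v))"
  have nn: "\<And>i. i \<in> {1..l} \<Longrightarrow> ?n i = int (dep H ?m) - int (dep H (\<Psi> i v))"
    using nv_eq[OF hp _ v] Psi by blast
  have pd: "int (dep H (psi_med P H \<phi> \<Psi> l v)) = int (dep H ?m) - ?z" using pm_prop[OF hp l Psi v] by blast
  have "(\<Sum>i=1..l. \<bar>int (dep H (psi_med P H \<phi> \<Psi> l v)) - int (dep H (\<Psi> i v))\<bar>) = (\<Sum>i=1..l. \<bar>?z - ?n i\<bar>)"
    by (rule sum.cong) (simp_all add: pd nn abs_minus_commute)
  also have "\<dots> \<le> (\<Sum>i=1..l. \<bar>?x - ?n i\<bar>)" using Z_opt[OF l, of ?n ?x] unfolding zv_def .
  also have "\<dots> = (\<Sum>i=1..l. \<bar>int (dep H (\<psi> v)) - int (dep H (\<Psi> i v))\<bar>)"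
    by (rule sum.cong) (simp_all add: nn abs_minus_commute)
  finally show ?thesis .
qed

theorem mainTheorem4:
  fixes P :: "'p rtree" and H :: "'h rtree" and \<phi> :: "'p \<Rightarrow> 'h"
    and \<Psi> :: "nat \<Rightarrow> ('p \<Rightarrow> 'h)" and l :: nat
  assumes "hp_triple P H \<phi>"
    and "l \<ge> 1"
    and "\<forall>i \<in> {1..l}. \<Psi> i \<in> recon P H \<phi>"
    and "inj_on \<Psi> {1..l}"
    and "\<psi> \<in> recon P H \<phi>"
  shows "(\<Sum>i = 1..l. d_edit P H \<phi> (psi_med P H \<phi> \<Psi> l) (\<Psi> i))
           \<le> (\<Sum>i = 1..l. d_edit P H \<phi> \<psi> (\<Psi> i))"
proof -
  note hp = assms(1) and l = assms(2) and Psi = assms(3) and psi = assms(5)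
  have pm: "psi_med P H \<phi> \<Psi> l \<in> recon P H \<phi>" by (rule pm_recon[OF hp l Psi])
  have "int (\<Sum>i = 1..l. d_edit P H \<phi> (psi_med P H \<phi> \<Psi> l) (\<Psi> i)) = (\<Sum>i = 1..l. DI P H (psi_med P H \<phi> \<Psi> l) (\<Psi> i))"
    unfolding of_nat_sum by (rule sum.cong) (use d_edit_eq[OF hp pm] Psi in auto)
  also have "\<dots> = (\<Sum>v\<in>verts P. \<Sum>i = 1..l. \<bar>int (dep H (psi_med P H \<phi> \<Psi> l v)) - int (dep H (\<Psi> i v))\<bar>)"
    unfolding DI_def by (rule sum.swap)
  also have "\<dots> \<le> (\<Sum>v\<in>verts P. \<Sum>i = 1..l. \<bar>int (dep H (\<psi> v)) - int (dep H (\<Psi> i v))\<bar>)"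
    by (rule sum_mono) (rule per_vertex[OF hp l Psi psi])
  also have "\<dots> = (\<Sum>i = 1..l. DI P H \<psi> (\<Psi> i))"
    unfolding DI_def by (rule sum.swap)
  also have "\<dots> = int (\<Sum>i = 1..l. d_edit P H \<phi> \<psi> (\<Psi> i))"
    unfolding of_nat_sum by (rule sum.cong) (use d_edit_eq[OF hp psi] Psi in auto)
  finally have "int (\<Sum>i = 1..l. d_edit P H \<phi> (psi_med P H \<phi> \<Psi> l) (\<Psi> i))
     \<le> int (\<Sum>i = 1..l. d_edit P H \<phi> \<psi> (\<Psi> i))" .
  then show ?thesis by (simp only: of_nat_le_iff)
qed

end
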